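(* Let $A$ be a Hopf algebra over a field $k$ and $(H,\Delta,\Delta')$ a commutative Hopf brace with first antipode $S$. Suppose $(A,H,\rho,\varphi)$ is a Hopf matched pair (with $H$ carrying the Hopf structure given by $\Delta$), $\rho(a)=a_{(-1)}\otimes a_{(0)}$, $\varphi(h)=h_{[0]}\otimes h_{[1]}$, and suppose $\rho':A\to H\otimes A$, $\rho'(a)=a_{(-1)'}\otimes a_{(0)'}$, makes $A$ a left $H_{\Delta'}$-comodule bialgebra, where $H_{\Delta'}=(H,m,1,\Delta',\epsilon,T)$. On the tensor product algebra $A\otimes H$ consider the comultiplications $$\widetilde{\Delta}(a\otimes h)=a_1\otimes a_{2(-1)}h_{1[0]}\otimes a_{2(0)}h_{1[1]}\otimes h_2\quad(\text{bicrossed coproduct }A\bowtie H),$$ $$\bar{\Delta}(a\otimes h)=a_1\otimes a_{2(-1)'}h_{1'}\otimes a_{2(0)'}\otimes h_{2'}\quad(\text{smash coproduct on }A\otimes H_{\Delta'}).$$ Then $(A\bowtie H,\widetilde{\Delta},\bar{\Delta})$ is a Hopf brace if and only if, for all $a\in A$ and $h\in H$, $$a_{(-1)'}\otimes a_{(0)'(-1)}\otimes a_{(0)'(0)}=a_{(-1)11'}S(a_{(-1)2})a_{(0)(-1)'}\otimes a_{(-1)12'}\otimes a_{(0)(0)'},$$ $$h_{1'}\otimes h_{2'[0]}\otimes h_{2'[1]}=h_{1[0]11'}S(h_{1[0]2})h_{1[1](-1)'}h_2\otimes h_{1[0]12'}\otimes h_{1[1](0)'}.$$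
   Context: All objects are over a field $k$. Sweedler notation: comultiplication of $A$ written $a_1\otimes a_2$; on $H$, $\Delta(h)=h_1\otimes h_2$ and $\Delta'(h)=h_{1'}\otimes h_{2'}$; mixed indices like $x_{11'}\otimes x_{12'}$ mean $\Delta'$ applied to $x_1$. A Hopf brace $(B,\Delta,\Delta')$ consists of an algebra with two Hopf algebra structures $(B,m,1,\Delta,\varepsilon,S)$ and $(B,m,1,\Delta',\epsilon,T)$ such that for all $h$: $h_{1'}\otimes h_{2'1}\otimes h_{2'2}=h_{11'}S(h_2)h_{31'}\otimes h_{12'}\otimes h_{32'}$; it is commutative if the algebra is commutative. A left comodule bialgebra is a left comodule whose coaction is an algebra map and which is a comodule coalgebra ($a_{(-1)'}\otimes a_{(0)'1}\otimes a_{(0)'2}=a_{1(-1)'}a_{2(-1)'}\otimes a_{1(0)'}\otimes a_{2(0)'}$, $a_{(-1)'}\varepsilon(a_{(0)'})=\varepsilon(a)1$). Hopf matched pair $(A,H,\rho,\varphi)$ for Hopf algebras $A,H$: $\rho:A\to H\otimes A$ makes $A$ a left $H$-comodule algebra, $\varphi:H\to H\otimes A$ makes $H$ a right $A$-comodule algebra, and for all $a,h$: (HM1) $a_{(-1)}\varepsilon_A(a_{(0)})=\varepsilon_A(a)1_H$, $\varepsilon_H(h_{[0]})h_{[1]}=\varepsilon_H(h)1_A$; (HM2) $a_{(-1)}\otimes a_{(0)1}\otimes a_{(0)2}=a_{1(-1)}a_{2(-1)[0]}\otimes a_{1(0)}a_{2(-1)[1]}\otimes a_{2(0)}$; (HM3)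 $h_{[0]1}\otimes h_{[0]2}\otimes h_{[1]}=h_{1[0]}\otimes h_{1[1](-1)}h_{2[0]}\otimes h_{1[1](0)}h_{2[1]}$; (HM4) $h_{[0]}a_{(-1)}\otimes h_{[1]}a_{(0)}=a_{(-1)}h_{[0]}\otimes a_{(0)}h_{[1]}$. For a Hopf matched pair, $A\otimes H$ with the tensor product algebra and comultiplication $\widetilde{\Delta}$ above is a Hopf algebra (the bicrossed coproduct $A\bowtie H$); likewise $A\otimes H_{\Delta'}$ with $\bar{\Delta}$ is a Hopf algebra (smash coproduct). *)

theory Defs
  imports "HOL-Library.Poly_Mapping"
begin

text \<open>
  A vector space over the field 'k is represented by
  the free vector space on a basis type 'b, i.e. finitely supported functions
  (every vector space has a basis).  The tensor product of
  the spaces with bases 'b and 'c is the free space on 'b \<times> 'c.  Linear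
  maps are given by their values on basis vectors and extended linearly by lin.
  Sweedler sums become nested applications of lin with bound basis indices.
\<close>

definition bv :: "'b \<Rightarrow> ('b \<Rightarrow>\<^sub>0 'k::field)" where
  "bv x = Poly_Mapping.single x 1"

definition smult :: "'k::field \<Rightarrow> ('b \<Rightarrow>\<^sub>0 'k) \<Rightarrow> ('b \<Rightarrow>\<^sub>0 'k)" where
  "smult c v = Poly_Mapping.map (\<lambda>t. c * t) v"

definition lin :: "('b \<Rightarrow> ('c \<Rightarrow>\<^sub>0 'k::field)) \<Rightarrow> ('b \<Rightarrow>\<^sub>0 'k) \<Rightarrow> ('c \<Rightarrow>\<^sub>0 'k)" where
  "lin f v = (\<Sum>x\<in>Poly_Mapping.keys v. smult (Poly_Mapping.lookup v x) (f x))"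

definition linf :: "('b \<Rightarrow> 'k::field) \<Rightarrow> ('b \<Rightarrow>\<^sub>0 'k) \<Rightarrow> 'k" where
  "linf f v = (\<Sum>x\<in>Poly_Mapping.keys v. Poly_Mapping.lookup v x * f x)"

definition tens :: "('b \<Rightarrow>\<^sub>0 'k::field) \<Rightarrow> ('c \<Rightarrow>\<^sub>0 'k) \<Rightarrow> ('b \<times> 'c \<Rightarrow>\<^sub>0 'k)" where
  "tens u v = lin (\<lambda>x. lin (\<lambda>y. bv (x, y)) v) u"

definition mulv :: "('b \<Rightarrow> 'b \<Rightarrow> ('b \<Rightarrow>\<^sub>0 'k::field)) \<Rightarrow> ('b \<Rightarrow>\<^sub>0 'k) \<Rightarrow> ('b \<Rightarrow>\<^sub>0 'k) \<Rightarrow> ('b \<Rightarrow>\<^sub>0 'k)" where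
  "mulv m u v = lin (\<lambda>x. lin (\<lambda>y. m x y) v) u"

definition tmul :: "('b \<Rightarrow> 'b \<Rightarrow> ('b \<Rightarrow>\<^sub>0 'k::field)) \<Rightarrow> ('c \<Rightarrow> 'c \<Rightarrow> ('c \<Rightarrow>\<^sub>0 'k))
    \<Rightarrow> 'b \<times> 'c \<Rightarrow> 'b \<times> 'c \<Rightarrow> ('b \<times> 'c \<Rightarrow>\<^sub>0 'k)" where
  "tmul m1 m2 p q = tens (m1 (fst p) (fst q)) (m2 (snd p) (snd q))"

definition is_algebra :: "('b \<Rightarrow> 'b \<Rightarrow> ('b \<Rightarrow>\<^sub>0 'k::field)) \<Rightarrow> ('b \<Rightarrow>\<^sub>0 'k) \<Rightarrow> bool" where
  "is_algebra m u \<longleftrightarrow>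
     (\<forall>x y z. mulv m (m x y) (bv z) = mulv m (bv x) (m y z)) \<and>
     (\<forall>x. mulv m u (bv x) = bv x \<and> mulv m (bv x) u = bv x)"

definition is_coalgebra :: "('b \<Rightarrow> ('b \<times> 'b \<Rightarrow>\<^sub>0 'k::field)) \<Rightarrow> ('b \<Rightarrow> 'k) \<Rightarrow> bool" where
  "is_coalgebra \<Delta> \<epsilon> \<longleftrightarrow>
     (\<forall>x. lin (\<lambda>(y, z). lin (\<lambda>(y1, y2). bv (y1, y2, z)) (\<Delta> y)) (\<Delta> x)
        = lin (\<lambda>(y, z). lin (\<lambda>(z1, z2). bv (y, z1, z2)) (\<Delta> z)) (\<Delta> x)) \<and>
     (\<forall>x. lin (\<lambda>(y, z). smult (\<epsilon> y) (bv z)) (\<Delta> x) = bv x \<and>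
          lin (\<lambda>(y, z). smult (\<epsilon> z) (bv y)) (\<Delta> x) = bv x)"

definition is_bialgebra ::
  "('b \<Rightarrow> 'b \<Rightarrow> ('b \<Rightarrow>\<^sub>0 'k::field)) \<Rightarrow> ('b \<Rightarrow>\<^sub>0 'k) \<Rightarrow> ('b \<Rightarrow> ('b \<times> 'b \<Rightarrow>\<^sub>0 'k)) \<Rightarrow> ('b \<Rightarrow> 'k) \<Rightarrow> bool" where
  "is_bialgebra m u \<Delta> \<epsilon> \<longleftrightarrow>
     is_algebra m u \<and> is_coalgebra \<Delta> \<epsilon> \<and>
     (\<forall>x y. lin \<Delta> (m x y) = mulv (tmul m m) (\<Delta> x) (\<Delta> y)) \<and>
     lin \<Delta> u = tens u u \<and>
     (\<forall>x y. linf \<epsilon> (m x y) = \<epsilon> x * \<epsilon> y) \<and>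
     linf \<epsilon> u = 1"

definition is_hopf_algebra ::
  "('b \<Rightarrow> 'b \<Rightarrow> ('b \<Rightarrow>\<^sub>0 'k::field)) \<Rightarrow> ('b \<Rightarrow>\<^sub>0 'k) \<Rightarrow> ('b \<Rightarrow> ('b \<times> 'b \<Rightarrow>\<^sub>0 'k)) \<Rightarrow> ('b \<Rightarrow> 'k)
    \<Rightarrow> ('b \<Rightarrow> ('b \<Rightarrow>\<^sub>0 'k)) \<Rightarrow> bool" where
  "is_hopf_algebra m u \<Delta> \<epsilon> S \<longleftrightarrow>
     is_bialgebra m u \<Delta> \<epsilon> \<and>
     (\<forall>x. lin (\<lambda>(y, z). mulv m (S y) (bv z)) (\<Delta> x) = smult (\<epsilon> x) u \<and>
          lin (\<lambda>(y, z). mulv m (bv y) (S z)) (\<Delta> x) = smult (\<epsilon> x) u)"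

definition is_commutative :: "('b \<Rightarrow> 'b \<Rightarrow> ('b \<Rightarrow>\<^sub>0 'k::field)) \<Rightarrow> bool" where
  "is_commutative m \<longleftrightarrow> (\<forall>x y. m x y = m y x)"

text \<open>h_{1'} \<otimes> h_{2'1} \<otimes> h_{2'2} = h_{11'} S(h_2) h_{31'} \<otimes> h_{12'} \<otimes> h_{32'}\<close>
definition is_hopf_brace ::
  "('b \<Rightarrow> 'b \<Rightarrow> ('b \<Rightarrow>\<^sub>0 'k::field)) \<Rightarrow> ('b \<Rightarrow>\<^sub>0 'k)
   \<Rightarrow> ('b \<Rightarrow> ('b \<times> 'b \<Rightarrow>\<^sub>0 'k)) \<Rightarrow> ('b \<Rightarrow> 'k) \<Rightarrow> ('b \<Rightarrow> ('b \<Rightarrow>\<^sub>0 'k))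
   \<Rightarrow> ('b \<Rightarrow> ('b \<times> 'b \<Rightarrow>\<^sub>0 'k)) \<Rightarrow> ('b \<Rightarrow> 'k) \<Rightarrow> ('b \<Rightarrow> ('b \<Rightarrow>\<^sub>0 'k)) \<Rightarrow> bool" where
  "is_hopf_brace m u \<Delta> \<epsilon> S \<Delta>' \<epsilon>' T \<longleftrightarrow>
     is_hopf_algebra m u \<Delta> \<epsilon> S \<and> is_hopf_algebra m u \<Delta>' \<epsilon>' T \<and>
     (\<forall>h. lin (\<lambda>(x, y). lin (\<lambda>(y1, y2). bv (x, y1, y2)) (\<Delta> y)) (\<Delta>' h)
        = lin (\<lambda>(x, y). lin (\<lambda>(x1, x2). lin (\<lambda>(x11, x12). lin (\<lambda>(y1, y2).
              tens (mulv m (mulv m (bv x11) (S x2)) (bv y1)) (bv (x12, y2)))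
            (\<Delta>' y)) (\<Delta>' x1)) (\<Delta> x)) (\<Delta> h))"

text \<open>(B, \<Delta>, \<Delta>') is a Hopf brace: counits and antipodes exist (they are
  unique when they exist).\<close>
definition hopf_brace_coproducts ::
  "('b \<Rightarrow> 'b \<Rightarrow> ('b \<Rightarrow>\<^sub>0 'k::field)) \<Rightarrow> ('b \<Rightarrow>\<^sub>0 'k)
   \<Rightarrow> ('b \<Rightarrow> ('b \<times> 'b \<Rightarrow>\<^sub>0 'k)) \<Rightarrow> ('b \<Rightarrow> ('b \<times> 'b \<Rightarrow>\<^sub>0 'k)) \<Rightarrow> bool" where
  "hopf_brace_coproducts m u \<Delta> \<Delta>' \<longleftrightarrow>
     (\<exists>\<epsilon> S \<epsilon>' T. is_hopf_brace m u \<Delta> \<epsilon> S \<Delta>' \<epsilon>' T)"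

definition left_comodule_algebra ::
  "('h \<Rightarrow> 'h \<Rightarrow> ('h \<Rightarrow>\<^sub>0 'k::field)) \<Rightarrow> ('h \<Rightarrow>\<^sub>0 'k) \<Rightarrow> ('h \<Rightarrow> ('h \<times> 'h \<Rightarrow>\<^sub>0 'k)) \<Rightarrow> ('h \<Rightarrow> 'k)
   \<Rightarrow> ('a \<Rightarrow> 'a \<Rightarrow> ('a \<Rightarrow>\<^sub>0 'k)) \<Rightarrow> ('a \<Rightarrow>\<^sub>0 'k) \<Rightarrow> ('a \<Rightarrow> ('h \<times> 'a \<Rightarrow>\<^sub>0 'k)) \<Rightarrow> bool" where
  "left_comodule_algebra mH uH \<Delta>H \<epsilon>H mA uA \<rho> \<longleftrightarrow>
     (\<forall>a. lin (\<lambda>(h, x). lin (\<lambda>(h1, h2). bv (h1, h2, x)) (\<Delta>H h)) (\<rho> a)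
        = lin (\<lambda>(h, x). lin (\<lambda>(g, y). bv (h, g, y)) (\<rho> x)) (\<rho> a)) \<and>
     (\<forall>a. lin (\<lambda>(h, x). smult (\<epsilon>H h) (bv x)) (\<rho> a) = bv a) \<and>
     (\<forall>a b. lin \<rho> (mA a b) = mulv (tmul mH mA) (\<rho> a) (\<rho> b)) \<and>
     lin \<rho> uA = tens uH uA"

definition right_comodule_algebra ::
  "('h \<Rightarrow> 'h \<Rightarrow> ('h \<Rightarrow>\<^sub>0 'k::field)) \<Rightarrow> ('h \<Rightarrow>\<^sub>0 'k)
   \<Rightarrow> ('a \<Rightarrow> 'a \<Rightarrow> ('a \<Rightarrow>\<^sub>0 'k)) \<Rightarrow> ('a \<Rightarrow>\<^sub>0 'k) \<Rightarrow> ('a \<Rightarrow> ('a \<times> 'a \<Rightarrow>\<^sub>0 'k)) \<Rightarrow> ('a \<Rightarrow> 'k)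
   \<Rightarrow> ('h \<Rightarrow> ('h \<times> 'a \<Rightarrow>\<^sub>0 'k)) \<Rightarrow> bool" where
  "right_comodule_algebra mH uH mA uA \<Delta>A \<epsilon>A \<phi> \<longleftrightarrow>
     (\<forall>h. lin (\<lambda>(g, x). lin (\<lambda>(g0, g1). bv (g0, g1, x)) (\<phi> g)) (\<phi> h)
        = lin (\<lambda>(g, x). lin (\<lambda>(x1, x2). bv (g, x1, x2)) (\<Delta>A x)) (\<phi> h)) \<and>
     (\<forall>h. lin (\<lambda>(g, x). smult (\<epsilon>A x) (bv g)) (\<phi> h) = bv h) \<and>
     (\<forall>h g. lin \<phi> (mH h g) = mulv (tmul mH mA) (\<phi> h) (\<phi> g)) \<and>
     lin \<phi> uH = tens uH uA"

definition left_comodule_bialgebra ::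
  "('h \<Rightarrow> 'h \<Rightarrow> ('h \<Rightarrow>\<^sub>0 'k::field)) \<Rightarrow> ('h \<Rightarrow>\<^sub>0 'k) \<Rightarrow> ('h \<Rightarrow> ('h \<times> 'h \<Rightarrow>\<^sub>0 'k)) \<Rightarrow> ('h \<Rightarrow> 'k)
   \<Rightarrow> ('a \<Rightarrow> 'a \<Rightarrow> ('a \<Rightarrow>\<^sub>0 'k)) \<Rightarrow> ('a \<Rightarrow>\<^sub>0 'k) \<Rightarrow> ('a \<Rightarrow> ('a \<times> 'a \<Rightarrow>\<^sub>0 'k)) \<Rightarrow> ('a \<Rightarrow> 'k)
   \<Rightarrow> ('a \<Rightarrow> ('h \<times> 'a \<Rightarrow>\<^sub>0 'k)) \<Rightarrow> bool" where
  "left_comodule_bialgebra mH uH \<Delta>H \<epsilon>H mA uA \<Delta>A \<epsilon>A \<rho> \<longleftrightarrow>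
     left_comodule_algebra mH uH \<Delta>H \<epsilon>H mA uA \<rho> \<and>
     (\<forall>a. lin (\<lambda>(h, x). lin (\<lambda>(x1, x2). bv (h, x1, x2)) (\<Delta>A x)) (\<rho> a)
        = lin (\<lambda>(a1, a2). lin (\<lambda>(h1, x1). lin (\<lambda>(h2, x2).
             tens (mulv mH (bv h1) (bv h2)) (bv (x1, x2))) (\<rho> a2)) (\<rho> a1)) (\<Delta>A a)) \<and>
     (\<forall>a. lin (\<lambda>(h, x). smult (\<epsilon>A x) (bv h)) (\<rho> a) = smult (\<epsilon>A a) uH)"

definition hopf_matched_pair ::
  "('a \<Rightarrow> 'a \<Rightarrow> ('a \<Rightarrow>\<^sub>0 'k::field)) \<Rightarrow> ('a \<Rightarrow>\<^sub>0 'k) \<Rightarrow> ('a \<Rightarrow> ('a \<times> 'a \<Rightarrow>\<^sub>0 'k)) \<Rightarrow> ('a \<Rightarrow> 'k)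
   \<Rightarrow> ('a \<Rightarrow> ('a \<Rightarrow>\<^sub>0 'k))
   \<Rightarrow> ('h \<Rightarrow> 'h \<Rightarrow> ('h \<Rightarrow>\<^sub>0 'k)) \<Rightarrow> ('h \<Rightarrow>\<^sub>0 'k) \<Rightarrow> ('h \<Rightarrow> ('h \<times> 'h \<Rightarrow>\<^sub>0 'k)) \<Rightarrow> ('h \<Rightarrow> 'k)
   \<Rightarrow> ('h \<Rightarrow> ('h \<Rightarrow>\<^sub>0 'k))
   \<Rightarrow> ('a \<Rightarrow> ('h \<times> 'a \<Rightarrow>\<^sub>0 'k)) \<Rightarrow> ('h \<Rightarrow> ('h \<times> 'a \<Rightarrow>\<^sub>0 'k)) \<Rightarrow> bool" where
  "hopf_matched_pair mA uA \<Delta>A \<epsilon>A SA mH uH \<Delta>H \<epsilon>H SH \<rho> \<phi> \<longleftrightarrow>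
     is_hopf_algebra mA uA \<Delta>A \<epsilon>A SA \<and> is_hopf_algebra mH uH \<Delta>H \<epsilon>H SH \<and>
     left_comodule_algebra mH uH \<Delta>H \<epsilon>H mA uA \<rho> \<and>
     right_comodule_algebra mH uH mA uA \<Delta>A \<epsilon>A \<phi> \<and>
     \<comment> \<open>HM1\<close>
     (\<forall>a. lin (\<lambda>(h, x). smult (\<epsilon>A x) (bv h)) (\<rho> a) = smult (\<epsilon>A a) uH) \<and>
     (\<forall>h. lin (\<lambda>(g, x). smult (\<epsilon>H g) (bv x)) (\<phi> h) = smult (\<epsilon>H h) uA) \<and>
     \<comment> \<open>HM2\<close>
     (\<forall>a. lin (\<lambda>(h, x). lin (\<lambda>(x1, x2). bv (h, x1, x2)) (\<Delta>A x)) (\<rho> a)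
        = lin (\<lambda>(a1, a2). lin (\<lambda>(g1, b1). lin (\<lambda>(g2, b2). lin (\<lambda>(g20, g21).
             tens (mH g1 g20) (tens (mA b1 g21) (bv b2)))
           (\<phi> g2)) (\<rho> a2)) (\<rho> a1)) (\<Delta>A a)) \<and>
     \<comment> \<open>HM3\<close>
     (\<forall>h. lin (\<lambda>(g, x). lin (\<lambda>(g1, g2). bv (g1, g2, x)) (\<Delta>H g)) (\<phi> h)
        = lin (\<lambda>(h1, h2). lin (\<lambda>(h10, h11). lin (\<lambda>(f, y). lin (\<lambda>(h20, h21).
             tens (bv h10) (tens (mH f h20) (mA y h21)))
           (\<phi> h2)) (\<rho> h11)) (\<phi> h1)) (\<Delta>H h)) \<and>
     \<comment> \<open>HM4\<close>
     (\<forall>a h. lin (\<lambda>(g, y). lin (\<lambda>(f, x). tens (mH g f) (mA y x)) (\<rho> a)) (\<phi> h)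
        = lin (\<lambda>(f, x). lin (\<lambda>(g, y). tens (mH f g) (mA x y)) (\<phi> h)) (\<rho> a))"

text \<open>bicrossed coproduct: a_1 \<otimes> a_{2(-1)}h_{1[0]} \<otimes> a_{2(0)}h_{1[1]} \<otimes> h_2\<close>
definition bicrossed_coproduct ::
  "('a \<Rightarrow> 'a \<Rightarrow> ('a \<Rightarrow>\<^sub>0 'k::field)) \<Rightarrow> ('a \<Rightarrow> ('a \<times> 'a \<Rightarrow>\<^sub>0 'k))
   \<Rightarrow> ('h \<Rightarrow> 'h \<Rightarrow> ('h \<Rightarrow>\<^sub>0 'k)) \<Rightarrow> ('h \<Rightarrow> ('h \<times> 'h \<Rightarrow>\<^sub>0 'k))
   \<Rightarrow> ('a \<Rightarrow> ('h \<times> 'a \<Rightarrow>\<^sub>0 'k)) \<Rightarrow> ('h \<Rightarrow> ('h \<times> 'a \<Rightarrow>\<^sub>0 'k))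
   \<Rightarrow> 'a \<times> 'h \<Rightarrow> (('a \<times> 'h) \<times> ('a \<times> 'h) \<Rightarrow>\<^sub>0 'k)" where
  "bicrossed_coproduct mA \<Delta>A mH \<Delta>H \<rho> \<phi> p =
     lin (\<lambda>(a1, a2). lin (\<lambda>(g, b). lin (\<lambda>(h1, h2). lin (\<lambda>(h10, h11).
        tens (tens (bv a1) (mH g h10)) (tens (mA b h11) (bv h2)))
      (\<phi> h1)) (\<Delta>H (snd p))) (\<rho> a2)) (\<Delta>A (fst p))"

text \<open>smash coproduct: a_1 \<otimes> a_{2(-1)'}h_{1'} \<otimes> a_{2(0)'} \<otimes> h_{2'}\<close>
definition smash_coproduct ::
  "('a \<Rightarrow> ('a \<times> 'a \<Rightarrow>\<^sub>0 'k::field))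
   \<Rightarrow> ('h \<Rightarrow> 'h \<Rightarrow> ('h \<Rightarrow>\<^sub>0 'k)) \<Rightarrow> ('h \<Rightarrow> ('h \<times> 'h \<Rightarrow>\<^sub>0 'k))
   \<Rightarrow> ('a \<Rightarrow> ('h \<times> 'a \<Rightarrow>\<^sub>0 'k))
   \<Rightarrow> 'a \<times> 'h \<Rightarrow> (('a \<times> 'h) \<times> ('a \<times> 'h) \<Rightarrow>\<^sub>0 'k)" where
  "smash_coproduct \<Delta>A mH \<Delta>H' \<rho>' p =
     lin (\<lambda>(a1, a2). lin (\<lambda>(g, b). lin (\<lambda>(h1, h2).
        tens (tens (bv a1) (mH g h1)) (tens (bv b) (bv h2)))
      (\<Delta>H' (snd p))) (\<rho>' a2)) (\<Delta>A (fst p))"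

end

theory Submission
  imports Defs
begin


lemma lookup_smult [simp]: "Poly_Mapping.lookup (smult c v) x = c * Poly_Mapping.lookup v x"
  unfolding smult_def by (simp add: Poly_Mapping.map.rep_eq when_def)

lemma smult_add_right: "smult c (u + v) = smult c u + smult c v"
  by (rule poly_mapping_eqI) (simp add: lookup_add algebra_simps)

lemma smult_add_left: "smult (c + d) v = smult c v + smult d v"
  by (rule poly_mapping_eqI) (simp add: lookup_add algebra_simps)

lemma smult_smult: "smult c (smult d v) = smult (c * d) v"
  by (rule poly_mapping_eqI) simp

lemma smult_one [simp]: "smult 1 v = v"
  by (rule poly_mapping_eqI) simp

lemma smult_zero_right [simp]: "smult c 0 = 0"
  by (rule poly_mapping_eqI) simp

lemma smult_zero_left [simp]: "smult 0 v = 0"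
  by (rule poly_mapping_eqI) simp

lemma smult_sum: "smult c (sum f X) = (\<Sum>x\<in>X. smult c (f x))"
  by (rule poly_mapping_eqI) (simp add: lookup_sum sum_distrib_left)

lemma sum_smult_left: "smult (sum g X) v = (\<Sum>x\<in>X. smult (g x) v)"
  by (rule poly_mapping_eqI) (simp add: lookup_sum sum_distrib_right)

lemma lookup_bv: "Poly_Mapping.lookup (bv x :: 'b \<Rightarrow>\<^sub>0 'k::field) y = (if x = y then 1 else 0)"
  unfolding bv_def by (simp add: lookup_single)

lemma keys_bv [simp]: "Poly_Mapping.keys (bv x :: 'b \<Rightarrow>\<^sub>0 'k::field) = {x}"
  unfolding bv_def by simp

lemma lookup_lin_superset:
  assumes "finite X" "Poly_Mapping.keys v \<subseteq> X"
  shows "Poly_Mapping.lookup (lin f v) t = (\<Sum>x\<in>X. Poly_Mapping.lookup v x * Poly_Mapping.lookup (f x) t)"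
proof -
  have "Poly_Mapping.lookup (lin f v) t = (\<Sum>x\<in>Poly_Mapping.keys v. Poly_Mapping.lookup v x * Poly_Mapping.lookup (f x) t)"
    unfolding lin_def by (simp add: lookup_sum)
  also have "\<dots> = (\<Sum>x\<in>X. Poly_Mapping.lookup v x * Poly_Mapping.lookup (f x) t)"
    by (rule sum.mono_neutral_left) (use assms in \<open>auto simp: in_keys_iff\<close>)
  finally show ?thesis .
qed

lemma lookup_lin: "Poly_Mapping.lookup (lin f v) t = (\<Sum>x\<in>Poly_Mapping.keys v. Poly_Mapping.lookup v x * Poly_Mapping.lookup (f x) t)"
  by (rule lookup_lin_superset) auto

lemma lin_bv [simp]: "lin f (bv x) = f x"
  by (rule poly_mapping_eqI) (simp add: lookup_lin lookup_bv)

lemma lin_add: "lin f (u + v) = lin f u + lin f v"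
proof (rule poly_mapping_eqI)
  fix t
  let ?X = "Poly_Mapping.keys u \<union> Poly_Mapping.keys v"
  have k: "Poly_Mapping.keys (u + v) \<subseteq> ?X" by (rule keys_add)
  show "Poly_Mapping.lookup (lin f (u + v)) t = Poly_Mapping.lookup (lin f u + lin f v) t"
    by (simp add: lookup_add lookup_lin_superset[OF _ k] lookup_lin_superset[of ?X u]
        lookup_lin_superset[of ?X v] sum.distrib algebra_simps)
qed

lemma lin_zero [simp]: "lin f 0 = 0"
  unfolding lin_def by simp

lemma lin_smult: "lin f (smult c v) = smult c (lin f v)"
proof (rule poly_mapping_eqI)
  fix t
  have k: "Poly_Mapping.keys (smult c v) \<subseteq> Poly_Mapping.keys v"
    by (auto simp: in_keys_iff)
  show "Poly_Mapping.lookup (lin f (smult c v)) t = Poly_Mapping.lookup (smult c (lin f v)) t"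
    using lookup_lin_superset[OF finite_keys k, of f t]
    by (simp add: lookup_lin sum_distrib_left algebra_simps)
qed

lemma lin_sum: "lin f (sum g X) = (\<Sum>x\<in>X. lin f (g x))"
  by (induction X rule: infinite_finite_induct) (auto simp: lin_add)

lemma lin_fun_add: "lin (\<lambda>x. f x + g x) v = lin f v + lin g v"
  by (rule poly_mapping_eqI) (simp add: lookup_lin lookup_add sum.distrib algebra_simps)

lemma lin_fun_zero [simp]: "lin (\<lambda>x. 0) v = 0"
  by (rule poly_mapping_eqI) (simp add: lookup_lin)

lemma lin_fun_smult: "lin (\<lambda>x. smult c (f x)) v = smult c (lin f v)"
  by (rule poly_mapping_eqI) (simp add: lookup_lin sum_distrib_left algebra_simps)

lemma lin_fun_smult_const: "lin (\<lambda>x. smult (g x) w) v = smult (linf g v) w"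
  by (rule poly_mapping_eqI) (simp add: lookup_lin linf_def sum_distrib_left ac_simps)

lemma lin_eq_sum: "lin f v = (\<Sum>x\<in>Poly_Mapping.keys v. smult (Poly_Mapping.lookup v x) (f x))"
  by (simp add: lin_def)

lemma lin_assoc: "lin f (lin g v) = lin (\<lambda>x. lin f (g x)) v"
  by (simp add: lin_eq_sum[of g v] lin_sum lin_smult lin_def[of "\<lambda>x. lin f (g x)"])

lemma lin_bv_id [simp]: "lin bv v = v"
  by (rule poly_mapping_eqI) (simp add: lookup_lin lookup_bv in_keys_iff if_distrib cong: if_cong)

lemma lin_bv_id': "lin (\<lambda>x. bv x) v = v"
  by simp

lemma lin_swap: "lin (\<lambda>x. lin (\<lambda>y. F x y) w) v = lin (\<lambda>y. lin (\<lambda>x. F x y) v) w"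
  by (rule poly_mapping_eqI) (simp add: lookup_lin sum_distrib_left sum_distrib_right algebra_simps
      sum.swap[of _ "Poly_Mapping.keys v"])

lemma lin_cong: "(\<And>x. x \<in> Poly_Mapping.keys v \<Longrightarrow> f x = g x) \<Longrightarrow> lin f v = lin g v"
  unfolding lin_def by (rule sum.cong) auto

lemma linf_bv [simp]: "linf f (bv x) = f x"
  by (simp add: linf_def lookup_bv)

lemma linf_superset:
  assumes "finite X" "Poly_Mapping.keys v \<subseteq> X"
  shows "linf f v = (\<Sum>x\<in>X. Poly_Mapping.lookup v x * f x)"
  unfolding linf_def by (rule sum.mono_neutral_left) (use assms in \<open>auto simp: in_keys_iff\<close>)

lemma keys_lin: "Poly_Mapping.keys (lin g v) \<subseteq> (\<Union>x\<in>Poly_Mapping.keys v. Poly_Mapping.keys (g x))"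
proof
  fix y assume "y \<in> Poly_Mapping.keys (lin g v)"
  then have "(\<Sum>x\<in>Poly_Mapping.keys v. Poly_Mapping.lookup v x * Poly_Mapping.lookup (g x) y) \<noteq> 0"
    by (simp add: in_keys_iff lookup_lin)
  then obtain x where "x \<in> Poly_Mapping.keys v" "Poly_Mapping.lookup (g x) y \<noteq> 0"
    by (metis (no_types, lifting) mult_zero_right sum.neutral)
  then show "y \<in> (\<Union>x\<in>Poly_Mapping.keys v. Poly_Mapping.keys (g x))" by (auto simp: in_keys_iff)
qed

lemma linf_lin: "linf f (lin g v) = linf (\<lambda>x. linf f (g x)) v"
proof -
  let ?Y = "\<Union>x\<in>Poly_Mapping.keys v. Poly_Mapping.keys (g x)"
  have fY: "finite ?Y" by simp
  have "linf f (lin g v) = (\<Sum>y\<in>?Y. Poly_Mapping.lookup (lin g v) y * f y)"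
    by (rule linf_superset[OF fY keys_lin])
  also have "\<dots> = (\<Sum>y\<in>?Y. \<Sum>x\<in>Poly_Mapping.keys v. Poly_Mapping.lookup v x * (Poly_Mapping.lookup (g x) y * f y))"
    by (simp add: lookup_lin sum_distrib_right mult.assoc)
  also have "\<dots> = (\<Sum>x\<in>Poly_Mapping.keys v. Poly_Mapping.lookup v x * (\<Sum>y\<in>?Y. Poly_Mapping.lookup (g x) y * f y))"
    by (simp add: sum.swap[of _ ?Y] sum_distrib_left)
  also have "\<dots> = (\<Sum>x\<in>Poly_Mapping.keys v. Poly_Mapping.lookup v x * linf f (g x))"
  proof (rule sum.cong[OF refl])
    fix x assume "x \<in> Poly_Mapping.keys v"
    then have "Poly_Mapping.keys (g x) \<subseteq> ?Y" by auto
    then show "Poly_Mapping.lookup v x * (\<Sum>y\<in>?Y. Poly_Mapping.lookup (g x) y * f y) = Poly_Mapping.lookup v x * linf f (g x)"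
      using linf_superset[OF fY, of "g x" f] by simp
  qed
  also have "\<dots> = linf (\<lambda>x. linf f (g x)) v" by (simp add: linf_def)
  finally show ?thesis .
qed

lemma linf_add: "linf f (u + v) = linf f u + linf f v"
proof -
  let ?X = "Poly_Mapping.keys u \<union> Poly_Mapping.keys v"
  have k: "Poly_Mapping.keys (u + v) \<subseteq> ?X" by (rule keys_add)
  have *: "linf f w = (\<Sum>x\<in>?X. Poly_Mapping.lookup w x * f x)" if "Poly_Mapping.keys w \<subseteq> ?X" for w
    unfolding linf_def by (rule sum.mono_neutral_left) (use that in \<open>auto simp: in_keys_iff\<close>)
  show ?thesis using k by (simp add: * lookup_add sum.distrib algebra_simps)
qed

lemma linf_smult: "linf f (smult c v) = c * linf f v"
proof -
  have k: "Poly_Mapping.keys (smult c v) \<subseteq> Poly_Mapping.keys v" by (auto simp: in_keys_iff)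
  have "linf f (smult c v) = (\<Sum>x\<in>Poly_Mapping.keys v. Poly_Mapping.lookup (smult c v) x * f x)"
    unfolding linf_def by (rule sum.mono_neutral_left) (use k in \<open>auto simp: in_keys_iff\<close>)
  then show ?thesis by (simp add: linf_def sum_distrib_left ac_simps)
qed

lemma linf_zero [simp]: "linf f 0 = 0"
  by (simp add: linf_def)

lemma linf_fun_mult: "linf (\<lambda>x. c * f x) v = c * linf f v"
  by (simp add: linf_def sum_distrib_left ac_simps)

lemma linf_fun_zero [simp]: "linf (\<lambda>x. 0) v = 0"
  by (simp add: linf_def)

lemma lin_inj_basis: "(\<And>x. lin f (bv x) = lin g (bv x)) \<Longrightarrow> lin f v = lin g v"
proof -
  assume "\<And>x. lin f (bv x) = lin g (bv x)"
  then have "f = g" by (simp add: fun_eq_iff)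
  then show ?thesis by simp
qed





lemma mulv_tmul: "mulv (tmul m1 m2) U V = lin (\<lambda>(a1,a2). lin (\<lambda>(b1,b2). tens (m1 a1 b1) (m2 a2 b2)) V) U"
  unfolding mulv_def tmul_def by (simp add: case_prod_beta')

lemma tmul_pair: "tmul m1 m2 (a1,a2) (b1,b2) = tens (m1 a1 b1) (m2 a2 b2)"
  by (simp add: tmul_def)

lemma smult_mult: "smult (c * d) v = smult c (smult d v)"
  by (simp add: smult_smult)

lemma lin_fun_smult_const': "lin (\<lambda>x. smult (g x) w) v = smult (linf g v) w"
  by (rule lin_fun_smult_const)

lemma lin_case_prod: "lin F (case_prod G x) = case_prod (\<lambda>a b. lin F (G a b)) x"
  by (simp add: split_def)

lemma lin_assoc_case: "lin F (lin (case_prod G) v) = lin (case_prod (\<lambda>a b. lin F (G a b))) v"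
  by (simp add: lin_assoc split_def)

lemma lin_lam_case: "lin (\<lambda>x. lin F (case_prod G x)) v = lin (case_prod (\<lambda>a b. lin F (G a b))) v"
  by (simp add: split_def)

lemma lin_fun_smult_case: "lin (case_prod (\<lambda>a b. smult c (F a b))) v = smult c (lin (case_prod F) v)"
  by (simp add: split_def lin_fun_smult)

lemma flcc: "lin (case_prod (\<lambda>x1 x2. lin (case_prod (\<lambda>y1 y2. F x1 x2 y1 y2)) (G w))) (P v) = lin (case_prod (\<lambda>y1 y2. lin (case_prod (\<lambda>x1 x2. F x1 x2 y1 y2)) (P v))) (G w)"
  unfolding split_def by (rule lin_swap[of "\<lambda>x y. F (fst x) (snd x) (fst y) (snd y)"])
lemma flcp: "lin (case_prod (\<lambda>x1 x2. lin (\<lambda>y. F x1 x2 y) (G w))) (P v) = lin (\<lambda>y. lin (case_prod (\<lambda>x1 x2. F x1 x2 y)) (P v)) (G w)"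
  unfolding split_def by (rule lin_swap[of "\<lambda>x y. F (fst x) (snd x) y"])
lemma flpc: "lin (\<lambda>x. lin (case_prod (\<lambda>y1 y2. F x y1 y2)) (G w)) (P v) = lin (case_prod (\<lambda>y1 y2. lin (\<lambda>x. F x y1 y2) (P v))) (G w)"
  unfolding split_def by (rule lin_swap[of "\<lambda>x y. F x (fst y) (snd y)"])
lemma flpp: "lin (\<lambda>x. lin (\<lambda>y. F x y) (G w)) (P v) = lin (\<lambda>y. lin (\<lambda>x. F x y) (P v)) (G w)"
  by (rule lin_swap)

lemma smult_float: "lin (\<lambda>x. smult (F x) (smult c (G x))) v = smult c (lin (\<lambda>x. smult (F x) (G x)) v)"
  by (simp add: smult_smult lin_fun_smult[symmetric] mult.commute)
lemma smult_float_case: "lin (case_prod (\<lambda>x y. smult (F x y) (smult c (G x y)))) v = smult c (lin (case_prod (\<lambda>x y. smult (F x y) (G x y))) v)"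
  by (simp add: split_def smult_float)
lemma linf_fun_mult_right: "linf (\<lambda>x. f x * c) v = linf f v * c"
  by (simp add: linf_def sum_distrib_left sum_distrib_right ac_simps)

lemma flmm: "lin (\<lambda>x. lin (\<lambda>y. F x y) (Mb s2 t2)) (Ma s1 t1) = lin (\<lambda>y. lin (\<lambda>x. F x y) (Ma s1 t1)) (Mb s2 t2)"
  by (rule lin_swap)
lemma flMc: "lin (case_prod (\<lambda>x1 x2. lin (\<lambda>y. F x1 x2 y) (M s t))) (G v) = lin (\<lambda>y. lin (case_prod (\<lambda>x1 x2. F x1 x2 y)) (G v)) (M s t)"
  unfolding split_def by (rule lin_swap[of "\<lambda>x y. F (fst x) (snd x) y"])
lemma flMp: "lin (\<lambda>x. lin (\<lambda>y. F x y) (M s t)) (G v) = lin (\<lambda>y. lin (\<lambda>x. F x y) (G v)) (M s t)"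
  by (rule lin_swap)
lemma usink: "lin (\<lambda>x. lin (\<lambda>y. F x y) (M s t)) U = lin (\<lambda>y. lin (\<lambda>x. F x y) U) (M s t)"
  by (rule lin_swap)
lemma uswap: "lin (\<lambda>x. lin (\<lambda>y. F x y) V) U = lin (\<lambda>y. lin (\<lambda>x. F x y) U) V"
  by (rule lin_swap)

lemma sink: "lin (\<lambda>x. lin (\<lambda>y. F x y) (G w)) (P s t) = lin (\<lambda>y. lin (\<lambda>x. F x y) (P s t)) (G w)"
  by (rule lin_swap)
lemma sinkc: "lin (\<lambda>x. lin (case_prod (\<lambda>y1 y2. F x y1 y2)) (G w)) (P s t) = lin (case_prod (\<lambda>y1 y2. lin (\<lambda>x. F x y1 y2) (P s t))) (G w)"
  unfolding split_def by (rule lin_swap[of "\<lambda>x y. F x (fst y) (snd y)"])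
lemma sinku: "lin (\<lambda>x. lin (\<lambda>y. F x y) (G w)) U = lin (\<lambda>y. lin (\<lambda>x. F x y) U) (G w)"
  by (rule lin_swap)
lemma sinkuc: "lin (\<lambda>x. lin (case_prod (\<lambda>y1 y2. F x y1 y2)) (G w)) U = lin (case_prod (\<lambda>y1 y2. lin (\<lambda>x. F x y1 y2) U)) (G w)"
  unfolding split_def by (rule lin_swap[of "\<lambda>x y. F x (fst y) (snd y)"])

lemmas sw = smult_float smult_float_case lin_lam_case lin_assoc lin_bv mulv_tmul tmul_pair tens_def mulv_def lin_fun_smult lin_fun_smult_case smult_mult

lemma lin_arg: "u = v \<Longrightarrow> lin K u = lin K v" by simp

section \<open>Vector-level algebra\<close>

lemma mulv_bv: "mulv m (bv x) (bv y) = m x y"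
  by (simp add: mulv_def)
lemma mulv_lin_left: "mulv m (lin F U) V = lin (\<lambda>x. mulv m (F x) V) U"
  by (simp add: mulv_def lin_assoc)
lemma mulv_lin_right: "mulv m U (lin G V) = lin (\<lambda>x. mulv m U (G x)) V"
  by (simp add: mulv_def lin_assoc lin_swap[of _ V])
lemma mulv_bv_left: "mulv m (bv x) V = lin (m x) V"
  by (simp add: mulv_def)
lemma mulv_bv_right: "mulv m U (bv y) = lin (\<lambda>x. m x y) U"
  by (simp add: mulv_def)

lemma alg_assoc_vec:
  assumes "is_algebra m u"
  shows "mulv m (mulv m x y) z = mulv m x (mulv m y z)"
proof -
  have b: "mulv m (m a b) (bv c) = mulv m (bv a) (m b c)" for a b c
    using assms by (simp add: is_algebra_def)
  have "mulv m (mulv m x y) z = lin (\<lambda>a. lin (\<lambda>b. lin (\<lambda>c. mulv m (m a b) (bv c)) z) y) x"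
    by (simp add: mulv_def lin_assoc lin_swap[of _ z])
  also have "\<dots> = lin (\<lambda>a. lin (\<lambda>b. lin (\<lambda>c. mulv m (bv a) (m b c)) z) y) x"
    by (simp only: b)
  also have "\<dots> = mulv m x (mulv m y z)"
    by (simp add: mulv_def lin_assoc)
  finally show ?thesis .
qed

lemma alg_lunit_vec:
  assumes "is_algebra m u"
  shows "mulv m u v = v"
proof -
  have b: "mulv m u (bv x) = bv x" for x using assms by (simp add: is_algebra_def)
  have "mulv m u v = lin (\<lambda>x. mulv m u (bv x)) v"
    by (simp add: mulv_lin_right[symmetric])
  also have "\<dots> = v" by (simp only: b lin_bv_id)
  finally show ?thesis .
qed

lemma alg_runit_vec:
  assumes "is_algebra m u"
  shows "mulv m v u = v"
proof -
  have b: "mulv m (bv x) u = bv x" for x using assms by (simp add: is_algebra_def)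
  have "mulv m v u = lin (\<lambda>x. mulv m (bv x) u) v"
    by (simp add: mulv_lin_left[symmetric])
  also have "\<dots> = v" by (simp only: b lin_bv_id)
  finally show ?thesis .
qed

lemma tens_lin_left: "tens (lin F U) V = lin (\<lambda>x. tens (F x) V) U"
  by (simp add: tens_def lin_assoc)
lemma tens_lin_right: "tens U (lin G V) = lin (\<lambda>y. tens U (G y)) V"
  by (simp add: tens_def lin_assoc lin_swap[of _ V])

lemma mulv_tmul_tens: "mulv (tmul m1 m2) (tens U1 U2) (tens V1 V2) = tens (mulv m1 U1 V1) (mulv m2 U2 V2)"
proof -
  have "mulv (tmul m1 m2) (tens U1 U2) (tens V1 V2) = lin (\<lambda>a1. lin (\<lambda>a2. lin (\<lambda>b1. lin (\<lambda>b2. tens (m1 a1 b1) (m2 a2 b2)) V2) V1) U2) U1"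
    by (simp add: mulv_tmul tens_def lin_assoc)
  also have "\<dots> = lin (\<lambda>a1. lin (\<lambda>b1. lin (\<lambda>a2. lin (\<lambda>b2. tens (m1 a1 b1) (m2 a2 b2)) V2) U2) V1) U1"
    by (simp only: lin_swap[of _ V1 U2])
  also have "\<dots> = lin (\<lambda>a1. lin (\<lambda>b1. tens (m1 a1 b1) (lin (\<lambda>a2. lin (\<lambda>b2. m2 a2 b2) V2) U2)) V1) U1"
    by (simp only: tens_lin_right[symmetric])
  also have "\<dots> = tens (mulv m1 U1 V1) (mulv m2 U2 V2)"
    by (simp only: tens_lin_left[symmetric] mulv_def)
  finally show ?thesis .
qed

lemma tensor_algebra:
  assumes A: "is_algebra m1 u1" and B: "is_algebra m2 u2"
  shows "is_algebra (tmul m1 m2) (tens u1 u2)"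
proof -
  have "mulv (tmul m1 m2) (tmul m1 m2 x y) (bv z) = mulv (tmul m1 m2) (bv x) (tmul m1 m2 y z)" for x y z
  proof -
    have bvp: "bv p = tens (bv (fst p)) (bv (snd p))" for p :: "_ \<times> _"
      by (simp add: tens_def)
    show ?thesis
      by (simp add: tmul_def bvp[of x] bvp[of z] mulv_tmul_tens)
         (simp add: mulv_bv[symmetric] alg_assoc_vec[OF A] alg_assoc_vec[OF B])
  qed
  moreover have "mulv (tmul m1 m2) (tens u1 u2) (bv x) = bv x" for x
  proof -
    have bvp: "bv p = tens (bv (fst p)) (bv (snd p))" for p :: "_ \<times> _"
      by (simp add: tens_def)
    show ?thesis by (simp add: bvp[of x] mulv_tmul_tens alg_lunit_vec[OF A] alg_lunit_vec[OF B])
  qed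
  moreover have "mulv (tmul m1 m2) (bv x) (tens u1 u2) = bv x" for x
  proof -
    have bvp: "bv p = tens (bv (fst p)) (bv (snd p))" for p :: "_ \<times> _"
      by (simp add: tens_def)
    show ?thesis by (simp add: bvp[of x] mulv_tmul_tens alg_runit_vec[OF A] alg_runit_vec[OF B])
  qed
  ultimately show ?thesis by (simp add: is_algebra_def)
qed

section \<open>Generic Hopf algebra facts in continuation form\<close>

locale hopf =
  fixes m :: "'b \<Rightarrow> 'b \<Rightarrow> ('b \<Rightarrow>\<^sub>0 'k::field)" and u :: "'b \<Rightarrow>\<^sub>0 'k"
    and D :: "'b \<Rightarrow> ('b \<times> 'b \<Rightarrow>\<^sub>0 'k)" and e :: "'b \<Rightarrow> 'k" and S :: "'b \<Rightarrow> ('b \<Rightarrow>\<^sub>0 'k)"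
  assumes H: "is_hopf_algebra m u D e S"
begin

lemma assoc0: "mulv m (m x y) (bv z) = mulv m (bv x) (m y z)"
  using H by (simp add: is_hopf_algebra_def is_bialgebra_def is_algebra_def)
lemma lunit0: "mulv m u (bv x) = bv x"
  using H by (simp add: is_hopf_algebra_def is_bialgebra_def is_algebra_def)
lemma runit0: "mulv m (bv x) u = bv x"
  using H by (simp add: is_hopf_algebra_def is_bialgebra_def is_algebra_def)
lemma coassoc0: "lin (\<lambda>(y, z). lin (\<lambda>(y1, y2). bv (y1, y2, z)) (D y)) (D x)
        = lin (\<lambda>(y, z). lin (\<lambda>(z1, z2). bv (y, z1, z2)) (D z)) (D x)"
  using H by (simp add: is_hopf_algebra_def is_bialgebra_def is_coalgebra_def)
lemma lcounit0: "lin (\<lambda>(y, z). smult (e y) (bv z)) (D x) = bv x"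
  using H by (simp add: is_hopf_algebra_def is_bialgebra_def is_coalgebra_def)
lemma rcounit0: "lin (\<lambda>(y, z). smult (e z) (bv y)) (D x) = bv x"
  using H by (simp add: is_hopf_algebra_def is_bialgebra_def is_coalgebra_def)
lemma mult0: "lin D (m x y) = mulv (tmul m m) (D x) (D y)"
  using H by (simp add: is_hopf_algebra_def is_bialgebra_def)
lemma unitD0: "lin D u = tens u u"
  using H by (simp add: is_hopf_algebra_def is_bialgebra_def)
lemma epsm0: "linf e (m x y) = e x * e y"
  using H by (simp add: is_hopf_algebra_def is_bialgebra_def)
lemma epsu0: "linf e u = 1"
  using H by (simp add: is_hopf_algebra_def is_bialgebra_def)
lemma lanti0: "lin (\<lambda>(y, z). mulv m (S y) (bv z)) (D x) = smult (e x) u"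
  using H by (simp add: is_hopf_algebra_def)
lemma ranti0: "lin (\<lambda>(y, z). mulv m (bv y) (S z)) (D x) = smult (e x) u"
  using H by (simp add: is_hopf_algebra_def)

lemma lunit_b: "lin (\<lambda>p. m p x) u = bv x"
  using lunit0 by (simp add: mulv_def)
lemma runit_b: "lin (m x) u = bv x"
  using runit0 by (simp add: mulv_def)

lemma assoc: "lin (\<lambda>p. lin K (m p z)) (m x y) = lin (\<lambda>q. lin K (m x q)) (m y z)"
  using lin_arg[OF assoc0, of K x y z] by (simp add: sw)
lemma lunit: "lin (\<lambda>p. lin K (m p x)) u = K x"
  using lin_arg[OF lunit0, of K x] by (simp add: sw)
lemma runit: "lin (\<lambda>p. lin K (m x p)) u = K x"
  using lin_arg[OF runit0, of K x] by (simp add: sw)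
lemma coassoc: "lin (\<lambda>(y, z). lin (\<lambda>(y1, y2). K y1 y2 z) (D y)) (D x)
        = lin (\<lambda>(y, z). lin (\<lambda>(z1, z2). K y z1 z2) (D z)) (D x)"
  using lin_arg[OF coassoc0, of "\<lambda>(a,b,c). K a b c" x]
  by (simp add: sw case_prod_beta')
lemma lcounit: "lin (\<lambda>(y, z). smult (e y) (K z)) (D x) = K x"
  using lin_arg[OF lcounit0, of K x] by (simp add: sw split_def lin_smult)
lemma rcounit: "lin (\<lambda>(y, z). smult (e z) (K y)) (D x) = K x"
  using lin_arg[OF rcounit0, of K x] by (simp add: sw split_def lin_smult)
lemma mult: "lin (\<lambda>z. lin K (D z)) (m x y) = lin (\<lambda>(x1,x2). lin (\<lambda>(y1,y2). lin (\<lambda>p. lin (\<lambda>q. K (p,q)) (m x2 y2)) (m x1 y1)) (D y)) (D x)"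
  using lin_arg[OF mult0[unfolded mulv_tmul], of K x y] by (simp add: lin_assoc lin_bv tens_def split_def)
lemma unitD: "lin (\<lambda>z. lin K (D z)) u = lin (\<lambda>p. lin (\<lambda>q. K (p,q)) u) u"
  using lin_arg[OF unitD0, of K] by (simp add: sw)
lemma epsm: "lin (\<lambda>p. smult (e p) W) (m x y) = smult (e x * e y) W"
  by (simp add: lin_fun_smult_const epsm0)
lemma epsu: "lin (\<lambda>p. smult (e p) W) u = W"
  by (simp add: lin_fun_smult_const epsu0)
lemma lanti: "lin (\<lambda>(y,z). lin (\<lambda>p. lin K (m p z)) (S y)) (D x) = smult (e x) (lin K u)"
  using lin_arg[OF lanti0, of K x] by (simp add: sw split_def lin_smult)
lemma ranti: "lin (\<lambda>(y,z). lin (\<lambda>p. lin K (m y p)) (S z)) (D x) = smult (e x) (lin K u)"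
  using lin_arg[OF ranti0, of K x] by (simp add: sw split_def lin_smult)
end


locale lcomod =
  fixes mH :: "'h \<Rightarrow> 'h \<Rightarrow> ('h \<Rightarrow>\<^sub>0 'k::field)" and uH :: "'h \<Rightarrow>\<^sub>0 'k"
    and DH :: "'h \<Rightarrow> ('h \<times> 'h \<Rightarrow>\<^sub>0 'k)" and eH :: "'h \<Rightarrow> 'k"
    and mA :: "'a \<Rightarrow> 'a \<Rightarrow> ('a \<Rightarrow>\<^sub>0 'k)" and uA :: "'a \<Rightarrow>\<^sub>0 'k"
    and r :: "'a \<Rightarrow> ('h \<times> 'a \<Rightarrow>\<^sub>0 'k)"
  assumes L: "left_comodule_algebra mH uH DH eH mA uA r"
begin
lemma coassoc: "lin (\<lambda>(h,x). lin (\<lambda>(h1,h2). K h1 h2 x) (DH h)) (r a) = lin (\<lambda>(h,x). lin (\<lambda>(g,y). K h g y) (r x)) (r a)"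
  using lin_arg[OF L[unfolded left_comodule_algebra_def, THEN conjunct1, rule_format, of a], of "\<lambda>(a,b,c). K a b c"]
  by (simp add: sw split_def)
lemma counit: "lin (\<lambda>(h,x). smult (eH h) (K x)) (r a) = K a"
  using lin_arg[OF L[unfolded left_comodule_algebra_def, THEN conjunct2, THEN conjunct1, rule_format, of a], of K]
  by (simp add: sw split_def lin_smult)
lemma mult: "lin (\<lambda>z. lin K (r z)) (mA a b) = lin (\<lambda>(h,x). lin (\<lambda>(g,y). lin (\<lambda>p. lin (\<lambda>q. K (p,q)) (mA x y)) (mH h g)) (r b)) (r a)"
  using lin_arg[OF L[unfolded left_comodule_algebra_def mulv_tmul, THEN conjunct2, THEN conjunct2, THEN conjunct1, rule_format, of a b], of K]
  by (simp add: lin_assoc lin_bv tens_def split_def)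
lemma unit: "lin (\<lambda>z. lin K (r z)) uA = lin (\<lambda>p. lin (\<lambda>q. K (p,q)) uA) uH"
  using lin_arg[OF L[unfolded left_comodule_algebra_def, THEN conjunct2, THEN conjunct2, THEN conjunct2], of K]
  by (simp add: sw)
end

locale rcomod =
  fixes mH :: "'h \<Rightarrow> 'h \<Rightarrow> ('h \<Rightarrow>\<^sub>0 'k::field)" and uH :: "'h \<Rightarrow>\<^sub>0 'k"
    and mA :: "'a \<Rightarrow> 'a \<Rightarrow> ('a \<Rightarrow>\<^sub>0 'k)" and uA :: "'a \<Rightarrow>\<^sub>0 'k"
    and DA :: "'a \<Rightarrow> ('a \<times> 'a \<Rightarrow>\<^sub>0 'k)" and eA :: "'a \<Rightarrow> 'k"
    and f :: "'h \<Rightarrow> ('h \<times> 'a \<Rightarrow>\<^sub>0 'k)"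
  assumes R: "right_comodule_algebra mH uH mA uA DA eA f"
begin
lemma coassoc: "lin (\<lambda>(g,x). lin (\<lambda>(g0,g1). K g0 g1 x) (f g)) (f h) = lin (\<lambda>(g,x). lin (\<lambda>(x1,x2). K g x1 x2) (DA x)) (f h)"
  using lin_arg[OF R[unfolded right_comodule_algebra_def, THEN conjunct1, rule_format, of h], of "\<lambda>(a,b,c). K a b c"]
  by (simp add: sw split_def)
lemma counit: "lin (\<lambda>(g,x). smult (eA x) (K g)) (f h) = K h"
  using lin_arg[OF R[unfolded right_comodule_algebra_def, THEN conjunct2, THEN conjunct1, rule_format, of h], of K]
  by (simp add: sw split_def lin_smult)
lemma mult: "lin (\<lambda>z. lin K (f z)) (mH h g) = lin (\<lambda>(h0,h1). lin (\<lambda>(g0,g1). lin (\<lambda>p. lin (\<lambda>q. K (p,q)) (mA h1 g1)) (mH h0 g0)) (f g)) (f h)"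
  using lin_arg[OF R[unfolded right_comodule_algebra_def mulv_tmul, THEN conjunct2, THEN conjunct2, THEN conjunct1, rule_format, of h g], of K]
  by (simp add: lin_assoc lin_bv tens_def split_def)
lemma unit: "lin (\<lambda>z. lin K (f z)) uH = lin (\<lambda>p. lin (\<lambda>q. K (p,q)) uA) uH"
  using lin_arg[OF R[unfolded right_comodule_algebra_def, THEN conjunct2, THEN conjunct2, THEN conjunct2], of K]
  by (simp add: sw)
end

section \<open>Twisted tensor coproducts\<close>

locale twisted = A: hopf mA uA DA eA SA + H: hopf mH uH DH eH SH
  for mA :: "'a \<Rightarrow> 'a \<Rightarrow> ('a \<Rightarrow>\<^sub>0 'k::field)" and uA DA eA SA
    and mH :: "'h \<Rightarrow> 'h \<Rightarrow> ('h \<Rightarrow>\<^sub>0 'k)" and uH DH eH SH +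
  fixes P :: "'a \<times> 'h \<Rightarrow> ('h \<times> 'a \<Rightarrow>\<^sub>0 'k)"
  assumes P1v: "\<And>a h. lin (\<lambda>(k,b). lin (\<lambda>(k1,k2). bv (k1,k2,b)) (DH k)) (P (a,h))
      = lin (\<lambda>(h1,h2). lin (\<lambda>(k1,c). lin (\<lambda>(k2,b). bv (k1,k2,b)) (P (c,h2))) (P (a,h1))) (DH h)"
    and P2v: "\<And>a h. lin (\<lambda>(k,b). lin (\<lambda>(b1,b2). bv (k,b1,b2)) (DA b)) (P (a,h))
      = lin (\<lambda>(a1,a2). lin (\<lambda>(k,c). lin (\<lambda>(k',b1). bv (k',b1,c)) (P (a1,k))) (P (a2,h))) (DA a)"
    and Pe1v: "\<And>a h. lin (\<lambda>(k,c). smult (eA c) (bv k)) (P (a,h)) = smult (eA a) (bv h)"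
    and Pe2v: "\<And>a h. lin (\<lambda>(k,c). smult (eH k) (bv c)) (P (a,h)) = smult (eH h) (bv a)"
    and Pmv: "\<And>a h b g. lin P (tens (mA a b) (mH h g)) = mulv (tmul mH mA) (P (a,h)) (P (b,g))"
    and Puv: "lin P (tens uA uH) = tens uH uA"
begin

lemma P1: "lin (\<lambda>(k,b). lin (\<lambda>(k1,k2). K k1 k2 b) (DH k)) (P (a,h))
      = lin (\<lambda>(h1,h2). lin (\<lambda>(k1,c). lin (\<lambda>(k2,b). K k1 k2 b) (P (c,h2))) (P (a,h1))) (DH h)"
  using lin_arg[OF P1v, of "\<lambda>(a,b,c). K a b c" a h] by (simp add: sw split_def)
lemma P2: "lin (\<lambda>(k,b). lin (\<lambda>(b1,b2). K k b1 b2) (DA b)) (P (a,h))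
      = lin (\<lambda>(a1,a2). lin (\<lambda>(k,c). lin (\<lambda>(k',b1). K k' b1 c) (P (a1,k))) (P (a2,h))) (DA a)"
  using lin_arg[OF P2v, of "\<lambda>(a,b,c). K a b c" a h] by (simp add: sw split_def)
lemma Pe1: "lin (\<lambda>(k,c). smult (eA c) (F k)) (P (a,h)) = smult (eA a) (F h)"
  using lin_arg[OF Pe1v, of F a h] by (simp add: sw split_def lin_smult)
lemma Pe2: "lin (\<lambda>(k,c). smult (eH k) (F c)) (P (a,h)) = smult (eH h) (F a)"
  using lin_arg[OF Pe2v, of F a h] by (simp add: sw split_def lin_smult)
lemma Pm: "lin (\<lambda>x. lin (\<lambda>y. lin K (P (x,y))) (mH h g)) (mA a b)
      = lin (\<lambda>(k1,c1). lin (\<lambda>(k2,c2). lin (\<lambda>k. lin (\<lambda>c. K (k,c)) (mA c1 c2)) (mH k1 k2)) (P (b,g))) (P (a,h))"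
  using lin_arg[OF Pmv[unfolded mulv_tmul], of K a b h g] by (simp add: lin_assoc lin_bv tens_def split_def)
lemma Pu: "lin (\<lambda>x. lin (\<lambda>y. lin K (P (x,y))) uH) uA = lin (\<lambda>k. lin (\<lambda>c. K (k,c)) uA) uH"
  using lin_arg[OF Puv, of K] by (simp add: sw)

lemmas tsinks =
  sinkc[where G=DA and P=mA] sinkc[where G=DH and P=mA] sinkc[where G=P and P=mA]
  sinkc[where G=DA and P=mH] sinkc[where G=DH and P=mH] sinkc[where G=P and P=mH]
  sink[where G=SA and P=mA] sink[where G=SH and P=mA] sink[where G=SA and P=mH] sink[where G=SH and P=mH]
  sinkuc[where G=DA and U=uA] sinkuc[where G=DH and U=uA] sinkuc[where G=P and U=uA]
  sinkuc[where G=DA and U=uH] sinkuc[where G=DH and U=uH] sinkuc[where G=P and U=uH]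
  sinku[where G=SA and U=uA] sinku[where G=SH and U=uA] sinku[where G=SA and U=uH] sinku[where G=SH and U=uH]
  usink[where M=mA and U=uA] usink[where M=mH and U=uA] usink[where M=mA and U=uH] usink[where M=mH and U=uH]
  uswap[where U=uH and V=uA]

definition "Dt p = lin (\<lambda>(a1,a2). lin (\<lambda>(h1,h2). lin (\<lambda>(k,b). bv ((a1,k),(b,h2))) (P (a2,h1))) (DH (snd p))) (DA (fst p))"
definition "et = (\<lambda>(a,h). eA a * eH h)"
definition "St p = lin (\<lambda>(k,b). tens (SA b) (SH k)) (P p)"

lemma Dt_pair: "Dt (a,h) = lin (\<lambda>(a1,a2). lin (\<lambda>(h1,h2). lin (\<lambda>(k,b). bv ((a1,k),(b,h2))) (P (a2,h1))) (DH h)) (DA a)"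
  by (simp add: Dt_def)

end

context twisted begin
lemma coassoc: "lin (\<lambda>(y,z). lin (\<lambda>(y1,y2). bv (y1,y2,z)) (Dt y)) (Dt (a,h)) = lin (\<lambda>(y,z). lin (\<lambda>(z1,z2). bv (y,z1,z2)) (Dt z)) (Dt (a,h))"
  apply (simp add: Dt_pair sw)
  apply (simp only: flcc[where G=DA and P=P] flcc[where G=DA and P=DH])
  apply (simp only: P1)
  apply (simp only: A.coassoc H.coassoc)
  apply (simp only: P2)
  apply (simp only: flcc[where G=DA and P=DH] flcc[where G=DH and P=P])
  apply (subst flcc[where G=P and P=P])
  apply (rule refl)
  done

lemma lcounit: "lin (\<lambda>(y,z). smult (et y) (bv z)) (Dt (a,h)) = bv (a,h)"
  by (simp add: Dt_pair sw et_def A.lcounit H.lcounit Pe2)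

lemma rcounit: "lin (\<lambda>(y,z). smult (et z) (bv y)) (Dt (a,h)) = bv (a,h)"
  by (simp add: Dt_pair sw et_def A.rcounit H.rcounit Pe1)

lemma mult: "lin Dt (tmul mA mH (a,h) (b,g)) = mulv (tmul (tmul mA mH) (tmul mA mH)) (Dt (a,h)) (Dt (b,g))"
  apply (simp add: Dt_pair sw tsinks A.mult H.mult Pm)
  apply (simp only: flcc[where G=DA and P=DH] flcc[where G=DA and P=P] flcc[where G=DH and P=P])
  done

lemma unit: "lin Dt (tens uA uH) = tens (tens uA uH) (tens uA uH)"
  apply (simp add: Dt_pair sw tsinks A.unitD H.unitD Pu)
  done

lemma epsm: "linf et (tmul mA mH (a,h) (b,g)) = et (a,h) * et (b,g)"
  by (simp add: tmul_pair tens_def linf_lin et_def linf_fun_mult linf_fun_mult_right A.epsm0 H.epsm0 ac_simps)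

lemma epsu: "linf et (tens uA uH) = 1"
  by (simp add: tens_def linf_lin et_def linf_fun_mult linf_fun_mult_right A.epsu0 H.epsu0)

lemma lanti: "lin (\<lambda>(y,z). mulv (tmul mA mH) (St y) (bv z)) (Dt (a,h)) = smult (et (a,h)) (tens uA uH)"
  apply (simp add: Dt_pair St_def sw tsinks et_def)
  apply (simp only: flcc[where G=DH and P=DA])
  apply (simp only: P2[symmetric])
  apply (simp only: flcp[where G=SH and P=DA] flpp[where G=SH and P=SA])
  apply (simp add: A.lanti Pe1 sw tsinks H.lanti)
  done

lemma ranti: "lin (\<lambda>(y,z). mulv (tmul mA mH) (bv y) (St z)) (Dt (a,h)) = smult (et (a,h)) (tens uA uH)"
  apply (simp add: Dt_pair St_def sw tsinks et_def)
  apply (simp only: P1[symmetric])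
  apply (simp only: flcp[where G=SA and P=DH] flmm[where Ma=mA and Mb=mH])
  apply (simp add: H.ranti Pe2 sw tsinks A.ranti)
  apply (simp add: smult_smult mult.commute)
  done

lemma talg: "is_algebra (tmul mA mH) (tens uA uH)"
proof -
  have 1: "mulv (tmul mA mH) (tmul mA mH (a,h) (b,g)) (bv (c,k)) = mulv (tmul mA mH) (bv (a,h)) (tmul mA mH (b,g) (c,k))" for a h b g c k
    apply (simp add: sw)
    apply (simp only: flmm[where Ma=mH and Mb=mA])
    apply (simp add: A.assoc H.assoc)
    done
  have 2: "mulv (tmul mA mH) (tens uA uH) (bv (a,h)) = bv (a,h)" for a h
    by (simp add: sw usink[where M=mA and U=uH] A.lunit H.lunit)
  have 3: "mulv (tmul mA mH) (bv (a,h)) (tens uA uH) = bv (a,h)" for a h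
    by (simp add: sw usink[where M=mA and U=uH] A.runit H.runit)
  show ?thesis unfolding is_algebra_def using 1 2 3 by auto
qed

theorem twisted_hopf: "is_hopf_algebra (tmul mA mH) (tens uA uH) Dt et St"
  unfolding is_hopf_algebra_def is_bialgebra_def is_coalgebra_def
  using talg coassoc lcounit rcounit mult unit epsm epsu lanti ranti
  by (auto simp: tmul_def)

end

locale setting =
  fixes mA :: "'a \<Rightarrow> 'a \<Rightarrow> ('a \<Rightarrow>\<^sub>0 'k::field)" and uA :: "'a \<Rightarrow>\<^sub>0 'k"
    and DA :: "'a \<Rightarrow> ('a \<times> 'a \<Rightarrow>\<^sub>0 'k)" and eA :: "'a \<Rightarrow> 'k" and SA :: "'a \<Rightarrow> ('a \<Rightarrow>\<^sub>0 'k)"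
    and mH :: "'h \<Rightarrow> 'h \<Rightarrow> ('h \<Rightarrow>\<^sub>0 'k)" and uH :: "'h \<Rightarrow>\<^sub>0 'k"
    and D :: "'h \<Rightarrow> ('h \<times> 'h \<Rightarrow>\<^sub>0 'k)" and e :: "'h \<Rightarrow> 'k" and S :: "'h \<Rightarrow> ('h \<Rightarrow>\<^sub>0 'k)"
    and D' :: "'h \<Rightarrow> ('h \<times> 'h \<Rightarrow>\<^sub>0 'k)" and e' :: "'h \<Rightarrow> 'k" and T :: "'h \<Rightarrow> ('h \<Rightarrow>\<^sub>0 'k)"
    and r :: "'a \<Rightarrow> ('h \<times> 'a \<Rightarrow>\<^sub>0 'k)" and f :: "'h \<Rightarrow> ('h \<times> 'a \<Rightarrow>\<^sub>0 'k)"
    and r' :: "'a \<Rightarrow> ('h \<times> 'a \<Rightarrow>\<^sub>0 'k)"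
  assumes hopfA: "is_hopf_algebra mA uA DA eA SA"
    and braceH: "is_hopf_brace mH uH D e S D' e' T"
    and commH: "is_commutative mH"
    and mp: "hopf_matched_pair mA uA DA eA SA mH uH D e S r f"
    and cb: "left_comodule_bialgebra mH uH D' e' mA uA DA eA r'"
begin

sublocale A: hopf mA uA DA eA SA by (rule hopf.intro, rule hopfA)
sublocale H: hopf mH uH D e S using braceH by (simp add: hopf_def is_hopf_brace_def)
sublocale H': hopf mH uH D' e' T using braceH by (simp add: hopf_def is_hopf_brace_def)
sublocale R: lcomod mH uH D e mA uA r using mp by (simp add: lcomod_def hopf_matched_pair_def)
sublocale F: rcomod mH uH mA uA DA eA f using mp by (simp add: rcomod_def hopf_matched_pair_def)
sublocale R': lcomod mH uH D' e' mA uA r' using cb by (simp add: lcomod_def left_comodule_bialgebra_def)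

lemma comm: "mH x y = mH y x"
  using commH by (simp add: is_commutative_def)

lemma HM1a: "lin (\<lambda>(h,x). smult (eA x) (K h)) (r a) = smult (eA a) (lin K uH)"
  using lin_arg[OF mp[unfolded hopf_matched_pair_def, THEN conjunct2, THEN conjunct2, THEN conjunct2, THEN conjunct2,
        THEN conjunct1, rule_format, of a], of K]
  by (simp add: sw split_def lin_smult)

lemma HM1b: "lin (\<lambda>(g,x). smult (e g) (K x)) (f h) = smult (e h) (lin K uA)"
  using lin_arg[OF mp[unfolded hopf_matched_pair_def, THEN conjunct2, THEN conjunct2, THEN conjunct2, THEN conjunct2,
        THEN conjunct2, THEN conjunct1, rule_format, of h], of K]
  by (simp add: sw split_def lin_smult)

lemma HM2: "lin (\<lambda>(h,x). lin (\<lambda>(x1,x2). K h x1 x2) (DA x)) (r a)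
  = lin (\<lambda>(a1,a2). lin (\<lambda>(g1,b1). lin (\<lambda>(g2,b2). lin (\<lambda>(g20,g21). lin (\<lambda>p. lin (\<lambda>q. K p q b2) (mA b1 g21)) (mH g1 g20)) (f g2)) (r a2)) (r a1)) (DA a)"
  using lin_arg[OF mp[unfolded hopf_matched_pair_def, THEN conjunct2, THEN conjunct2, THEN conjunct2, THEN conjunct2,
        THEN conjunct2, THEN conjunct2, THEN conjunct1, rule_format, of a], of "\<lambda>(a,b,c). K a b c"]
  by (simp add: sw split_def)

lemma HM3: "lin (\<lambda>(g,x). lin (\<lambda>(g1,g2). K g1 g2 x) (D g)) (f h)
  = lin (\<lambda>(h1,h2). lin (\<lambda>(h10,h11). lin (\<lambda>(g,y). lin (\<lambda>(h20,h21). lin (\<lambda>p. lin (\<lambda>q. K h10 p q) (mA y h21)) (mH g h20)) (f h2)) (r h11)) (f h1)) (D h)"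
  using lin_arg[OF mp[unfolded hopf_matched_pair_def, THEN conjunct2, THEN conjunct2, THEN conjunct2, THEN conjunct2,
        THEN conjunct2, THEN conjunct2, THEN conjunct2, THEN conjunct1, rule_format, of h], of "\<lambda>(a,b,c). K a b c"]
  by (simp add: sw split_def)

lemma HM4: "lin (\<lambda>(g,y). lin (\<lambda>(g',x). lin (\<lambda>p. lin (\<lambda>q. K p q) (mA y x)) (mH g g')) (r a)) (f h)
  = lin (\<lambda>(g',x). lin (\<lambda>(g,y). lin (\<lambda>p. lin (\<lambda>q. K p q) (mA x y)) (mH g' g)) (f h)) (r a)"
  using lin_arg[OF mp[unfolded hopf_matched_pair_def, THEN conjunct2, THEN conjunct2, THEN conjunct2, THEN conjunct2,
        THEN conjunct2, THEN conjunct2, THEN conjunct2, THEN conjunct2, rule_format, of a h], of "\<lambda>(a,b). K a b"]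
  by (simp add: sw split_def)

lemma CB: "lin (\<lambda>(h,x). lin (\<lambda>(x1,x2). K h x1 x2) (DA x)) (r' a)
  = lin (\<lambda>(a1,a2). lin (\<lambda>(h1,x1). lin (\<lambda>(h2,x2). lin (\<lambda>p. K p x1 x2) (mH h1 h2)) (r' a2)) (r' a1)) (DA a)"
  using lin_arg[OF cb[unfolded left_comodule_bialgebra_def, THEN conjunct2, THEN conjunct1, rule_format, of a], of "\<lambda>(a,b,c). K a b c"]
  by (simp add: sw split_def)

lemma CBe: "lin (\<lambda>(h,x). smult (eA x) (K h)) (r' a) = smult (eA a) (lin K uH)"
  using lin_arg[OF cb[unfolded left_comodule_bialgebra_def, THEN conjunct2, THEN conjunct2, rule_format, of a], of K]
  by (simp add: sw split_def lin_smult)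

lemma brace: "lin (\<lambda>(x, y). lin (\<lambda>(y1, y2). K x y1 y2) (D y)) (D' h)
   = lin (\<lambda>(x, y). lin (\<lambda>(x1, x2). lin (\<lambda>(x11, x12). lin (\<lambda>(y1, y2).
       lin (\<lambda>q. lin (\<lambda>p. lin (\<lambda>w. K w x12 y2) (mH p y1)) (mH x11 q)) (S x2)) (D' y)) (D' x1)) (D x)) (D h)"
  using lin_arg[OF braceH[unfolded is_hopf_brace_def, THEN conjunct2, THEN conjunct2, rule_format, of h], of "\<lambda>(a,b,c). K a b c"]
  by (simp add: sw split_def)


lemmas sinks =
  sink[where G=SA and P=mA]
  sink[where G=S and P=mA]
  sink[where G=T and P=mA]
  sinkc[where G=DA and P=mA]
  sinkc[where G=r and P=mA]
  sinkc[where G=r' and P=mA]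
  sinkc[where G=f and P=mA]
  sinkc[where G=D and P=mA]
  sinkc[where G=D' and P=mA]
  sink[where G=SA and P=mH]
  sink[where G=S and P=mH]
  sink[where G=T and P=mH]
  sinkc[where G=DA and P=mH]
  sinkc[where G=r and P=mH]
  sinkc[where G=r' and P=mH]
  sinkc[where G=f and P=mH]
  sinkc[where G=D and P=mH]
  sinkc[where G=D' and P=mH]
  sinku[where G=SA and U=uA]
  sinku[where G=S and U=uA]
  sinku[where G=T and U=uA]
  sinkuc[where G=DA and U=uA]
  sinkuc[where G=r and U=uA]
  sinkuc[where G=r' and U=uA]
  sinkuc[where G=f and U=uA]
  sinkuc[where G=D and U=uA]
  sinkuc[where G=D' and U=uA]
  sinku[where G=SA and U=uH]
  sinku[where G=S and U=uH]
  sinku[where G=T and U=uH]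
  sinkuc[where G=DA and U=uH]
  sinkuc[where G=r and U=uH]
  sinkuc[where G=r' and U=uH]
  sinkuc[where G=f and U=uH]
  sinkuc[where G=D and U=uH]
  sinkuc[where G=D' and U=uH]

  usink[where M=mA and U=uA] usink[where M=mH and U=uA] usink[where M=mA and U=uH] usink[where M=mH and U=uH]
  uswap[where U=uH and V=uA]

definition "P = (\<lambda>(a,h). lin (\<lambda>(g,b). lin (\<lambda>(h0,h1). tens (mH g h0) (mA b h1)) (f h)) (r a))"
definition "P' = (\<lambda>(a,h). lin (\<lambda>(g,b). tens (mH g h) (bv b)) (r' a))"

lemma P_pair: "P (a,h) = lin (\<lambda>(g,b). lin (\<lambda>(h0,h1). tens (mH g h0) (mA b h1)) (f h)) (r a)"
  by (simp add: P_def)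
lemma P'_pair: "P' (a,h) = lin (\<lambda>(g,b). tens (mH g h) (bv b)) (r' a)"
  by (simp add: P'_def)


lemma P1v: "lin (\<lambda>(k,b). lin (\<lambda>(k1,k2). bv (k1,k2,b)) (D k)) (P (a,h))
      = lin (\<lambda>(h1,h2). lin (\<lambda>(k1,c). lin (\<lambda>(k2,b). bv (k1,k2,b)) (P (c,h2))) (P (a,h1))) (D h)"
  apply (simp add: P_pair sw sinks H.mult R.mult F.mult)
  apply (simp only: flcc[where G=D and P=f])
  apply (simp only: R.coassoc)
  apply (simp only: HM3)
  apply (simp only: flcc[where G=D and P=r])
  apply (simp only: flcc[where G=r and P=f])
  apply (simp only: flmm[where Ma=mA and Mb=mH])
  apply (simp only: H.assoc A.assoc)
  apply (subst (2) flmm[where Ma=mH and Mb=mH])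
  apply (rule refl)
  done

lemma P2v: "lin (\<lambda>(k,b). lin (\<lambda>(b1,b2). bv (k,b1,b2)) (DA b)) (P (a,h))
      = lin (\<lambda>(a1,a2). lin (\<lambda>(k,c). lin (\<lambda>(k',b1). bv (k',b1,c)) (P (a1,k))) (P (a2,h))) (DA a)"
  apply (simp add: P_pair sw sinks A.mult R.mult F.mult)
  apply (simp only: flcc[where G=DA and P=f])
  apply (simp only: HM2 F.coassoc[symmetric])
  apply (simp only: sinks)
  apply (simp only: flcc[where G=f and w=h and P=r] flcc[where G=f and w=h and P=f])
  apply (simp only: flmm[where Ma=mA and Mb=mH])
  apply (simp only: H.assoc A.assoc)
  apply (subst flcc[where G=r and P=r])
  apply (subst flmm[where Ma=mA and Mb=mA])
  apply (rule refl)
  done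

lemma Pe1v: "lin (\<lambda>(k,c). smult (eA c) (bv k)) (P (a,h)) = smult (eA a) (bv h)"
  by (simp add: P_pair sw sinks A.epsm F.counit HM1a H.lunit H.lunit_b)

lemma Pe2v: "lin (\<lambda>(k,c). smult (e k) (bv c)) (P (a,h)) = smult (e h) (bv a)"
  by (simp add: P_pair sw sinks H.epsm HM1b A.runit R.counit A.runit_b)

lemma A_alg: "is_algebra mA uA" using hopfA by (simp add: is_hopf_algebra_def is_bialgebra_def)
lemma H_alg: "is_algebra mH uH" using braceH by (simp add: is_hopf_brace_def is_hopf_algebra_def is_bialgebra_def)
lemma T_alg: "is_algebra (tmul mH mA) (tens uH uA)" by (rule tensor_algebra[OF H_alg A_alg])

abbreviation "mT \<equiv> mulv (tmul mH mA)"

lemma T_assoc: "mT (mT x y) z = mT x (mT y z)" by (rule alg_assoc_vec[OF T_alg])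
lemma T_lunit: "mT (tens uH uA) x = x" by (rule alg_lunit_vec[OF T_alg])
lemma T_runit: "mT x (tens uH uA) = x" by (rule alg_runit_vec[OF T_alg])

lemma r_mult: "lin r (mA a b) = mT (r a) (r b)"
  using mp by (simp add: hopf_matched_pair_def left_comodule_algebra_def)
lemma r_unit: "lin r uA = tens uH uA"
  using mp by (simp add: hopf_matched_pair_def left_comodule_algebra_def)
lemma f_mult: "lin f (mH h g) = mT (f h) (f g)"
  using mp by (simp add: hopf_matched_pair_def right_comodule_algebra_def)
lemma f_unit: "lin f uH = tens uH uA"
  using mp by (simp add: hopf_matched_pair_def right_comodule_algebra_def)
lemma HM4v: "mT (f h) (r a) = mT (r a) (f h)"
  using mp by (simp add: hopf_matched_pair_def mulv_tmul)

lemma P_mT: "P (x,y) = mT (r x) (f y)"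
  by (simp add: P_pair mulv_tmul)

lemma P_lin: "lin P (tens U V) = mT (lin r U) (lin f V)"
  by (simp add: tens_def lin_assoc P_mT mulv_lin_left mulv_lin_right lin_swap[where w=U and v=V])

lemma Pmv: "lin P (tens (mA a b) (mH h g)) = mulv (tmul mH mA) (P (a,h)) (P (b,g))"
proof -
  have "lin P (tens (mA a b) (mH h g)) = mT (mT (r a) (r b)) (mT (f h) (f g))"
    by (simp add: P_lin r_mult f_mult)
  also have "\<dots> = mT (r a) (mT (mT (r b) (f h)) (f g))"
    by (simp only: T_assoc)
  also have "\<dots> = mT (r a) (mT (mT (f h) (r b)) (f g))"
    by (simp only: HM4v)
  also have "\<dots> = mT (mT (r a) (f h)) (mT (r b) (f g))"
    by (simp only: T_assoc)
  finally show ?thesis by (simp add: P_mT)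
qed

lemma Puv: "lin P (tens uA uH) = tens uH uA"
  by (simp add: P_lin r_unit f_unit T_lunit)


lemma P'1v: "lin (\<lambda>(k,b). lin (\<lambda>(k1,k2). bv (k1,k2,b)) (D' k)) (P' (a,h))
      = lin (\<lambda>(h1,h2). lin (\<lambda>(k1,c). lin (\<lambda>(k2,b). bv (k1,k2,b)) (P' (c,h2))) (P' (a,h1))) (D' h)"
  apply (simp add: P'_pair sw sinks H'.mult)
  apply (simp only: R'.coassoc)
  apply (simp only: flcc[where G=D' and P=r'])
  done

lemma P'2v: "lin (\<lambda>(k,b). lin (\<lambda>(b1,b2). bv (k,b1,b2)) (DA b)) (P' (a,h))
      = lin (\<lambda>(a1,a2). lin (\<lambda>(k,c). lin (\<lambda>(k',b1). bv (k',b1,c)) (P' (a1,k))) (P' (a2,h))) (DA a)"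
  apply (simp add: P'_pair sw sinks)
  apply (simp only: CB)
  apply (simp only: H.assoc)
  apply (subst flcc[where G=r' and P=r'])
  apply (rule refl)
  done

lemma P'e1v: "lin (\<lambda>(k,c). smult (eA c) (bv k)) (P' (a,h)) = smult (eA a) (bv h)"
  by (simp add: P'_pair sw sinks CBe H.lunit_b)

lemma P'e2v: "lin (\<lambda>(k,c). smult (e' k) (bv c)) (P' (a,h)) = smult (e' h) (bv a)"
  by (simp add: P'_pair sw sinks H'.epsm R'.counit)

lemma r'_mult: "lin r' (mA a b) = mT (r' a) (r' b)"
  using cb by (simp add: left_comodule_bialgebra_def left_comodule_algebra_def)
lemma r'_unit: "lin r' uA = tens uH uA"
  using cb by (simp add: left_comodule_bialgebra_def left_comodule_algebra_def)

lemma P'_mT: "P' (x,y) = mT (r' x) (tens (bv y) uA)"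
  by (simp add: P'_pair mulv_tmul tens_def lin_assoc lin_lam_case sinks A.runit)

lemma P'_lin: "lin P' (tens U V) = mT (lin r' U) (tens V uA)"
proof -
  have "lin P' (tens U V) = lin (\<lambda>x. lin (\<lambda>y. mT (r' x) (tens (bv y) uA)) V) U"
    by (simp add: tens_def lin_assoc P'_mT)
  also have "\<dots> = lin (\<lambda>x. mT (r' x) (lin (\<lambda>y. tens (bv y) uA) V)) U"
    by (simp only: mulv_lin_right)
  also have "\<dots> = lin (\<lambda>x. mT (r' x) (tens V uA)) U"
    by (simp only: tens_lin_left[symmetric] lin_bv_id')
  also have "\<dots> = mT (lin r' U) (tens V uA)"
    by (simp only: mulv_lin_left)
  finally show ?thesis .
qed

lemma H_comm_vec: "mulv mH U V = mulv mH V U"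
  unfolding mulv_def by (simp add: comm lin_swap[where w=U and v=V])

lemma central: "mT (tens V uA) W = mT W (tens V uA)"
proof -
  have "mT (tens V uA) (bv (p,q)) = mT (bv (p,q)) (tens V uA)" for p q
  proof -
    have bvp: "bv (p,q) = tens (bv p) (bv q)" by (simp add: tens_def)
    show ?thesis
      by (simp only: bvp mulv_tmul_tens alg_lunit_vec[OF A_alg] alg_runit_vec[OF A_alg] H_comm_vec[of V])
  qed
  then have "lin (\<lambda>x. mT (tens V uA) (bv x)) W = lin (\<lambda>x. mT (bv x) (tens V uA)) W"
    by (metis (no_types, lifting) surj_pair)
  then show ?thesis by (simp add: mulv_lin_left[symmetric] mulv_lin_right[symmetric])
qed

lemma P'mv: "lin P' (tens (mA a b) (mH h g)) = mulv (tmul mH mA) (P' (a,h)) (P' (b,g))"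
proof -
  have th: "tens (mH h g) uA = mT (tens (bv h) uA) (tens (bv g) uA)"
    by (simp add: mulv_tmul_tens alg_lunit_vec[OF A_alg] mulv_bv)
  have "lin P' (tens (mA a b) (mH h g)) = mT (mT (r' a) (r' b)) (mT (tens (bv h) uA) (tens (bv g) uA))"
    by (simp add: P'_lin r'_mult th)
  also have "\<dots> = mT (r' a) (mT (mT (r' b) (tens (bv h) uA)) (tens (bv g) uA))"
    by (simp only: T_assoc)
  also have "\<dots> = mT (r' a) (mT (mT (tens (bv h) uA) (r' b)) (tens (bv g) uA))"
    by (simp only: central)
  also have "\<dots> = mT (mT (r' a) (tens (bv h) uA)) (mT (r' b) (tens (bv g) uA))"
    by (simp only: T_assoc)
  finally show ?thesis by (simp add: P'_mT)
qed

lemma P'uv: "lin P' (tens uA uH) = tens uH uA"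
  by (simp add: P'_lin r'_unit T_lunit)


end

sublocale setting \<subseteq> TT: twisted mA uA DA eA SA mH uH D e S P
  by (unfold_locales) (fact P1v P2v Pe1v Pe2v Pmv Puv)+

sublocale setting \<subseteq> TB: twisted mA uA DA eA SA mH uH D' e' T P'
  by (unfold_locales) (fact P'1v P'2v P'e1v P'e2v P'mv P'uv)+

context twisted begin
lemma coassocK: "lin (\<lambda>(y,z). lin (\<lambda>(y1,y2). K y1 y2 z) (Dt y)) (Dt (a,h)) = lin (\<lambda>(y,z). lin (\<lambda>(z1,z2). K y z1 z2) (Dt z)) (Dt (a,h))"
  using lin_arg[OF coassoc, of "\<lambda>(a,b,c). K a b c" a h] by (simp add: lin_assoc lin_lam_case split_def)
end

context setting begin

definition "MC2L b h = lin (\<lambda>(h1,h2). lin (\<lambda>(\<kappa>,c). lin (\<lambda>(g1,g2). lin (\<lambda>(k,c'). bv (\<kappa>,k,c',g2)) (P (c,g1))) (D h2)) (P' (b,h1))) (D' h)"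
definition "MC2R b h = lin (\<lambda>(g,h2). lin (\<lambda>(\<kappa>',\<delta>). lin (\<lambda>(k,\<gamma>). lin (\<lambda>(k1,k2). lin (\<lambda>(h21,h22). lin (\<lambda>(q,s).
   lin (\<lambda>sg. lin (\<lambda>t. lin (\<lambda>w. bv (w,k2,s,h22)) (mH t q)) (mH k1 sg)) (S \<gamma>)) (P' (\<delta>,h21))) (D' h2)) (D' k)) (D \<kappa>')) (P (b,g))) (D h)"
definition "Wr a X = lin (\<lambda>(a1,a2). lin (\<lambda>(a21,a22). lin (\<lambda>(\<kappa>,k,c,g2). lin (\<lambda>(k',c1). bv ((a1,k'),(c1,k),(c,g2))) (P' (a21,\<kappa>))) (X a22)) (DA a2)) (DA a)"

lemma brace_L: "lin (\<lambda>(x,y). lin (\<lambda>(y1,y2). bv (x,y1,y2)) (TT.Dt y)) (TB.Dt (a,h)) = Wr a (\<lambda>b. MC2L b h)"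
  apply (simp add: TT.Dt_pair TB.Dt_pair Wr_def MC2L_def sw)
  apply (simp only: TB.P2)
  apply (simp only: flcc[where G=DA and P=D'] flcc[where G=D and P=P'] flcc[where G=P and P=P'])
  done


lemmas psinks = sinkc[where G=P and P=mA] sinkc[where G=P and P=mH] sinkc[where G=P' and P=mA] sinkc[where G=P' and P=mH]
  sinkuc[where G=P and U=uA] sinkuc[where G=P and U=uH] sinkuc[where G=P' and U=uA] sinkuc[where G=P' and U=uH]

lemma Phi: "lin (\<lambda>(z1,z2). lin (\<lambda>s. lin (\<lambda>(y1,y2). tens (mulv (tmul mA mH) (bv s) (bv y1)) (bv y2)) (TB.Dt z2)) (TT.St z1)) (TT.Dt (c,h))
  = lin (\<lambda>(h1,h2). lin (\<lambda>(\<gamma>,\<delta>). lin (\<lambda>sg. lin (\<lambda>(h21,h22). lin (\<lambda>(q,s'). tens (tens uA (mH sg q)) (bv (s',h22))) (P' (\<delta>,h21))) (D' h2)) (S \<gamma>)) (P (c,h1))) (D h)"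
  apply (simp add: TT.Dt_pair TB.Dt_pair TT.St_def sw sinks psinks)
  apply (simp only: flcc[where G=D and P=DA])
  apply (simp only: TT.P2[symmetric])
  apply (simp only: flpc[where G=DA and P=SA] flpc[where G=DA and P=S])
  apply (simp only: A.coassoc[symmetric])
  apply (simp only: flMp[where M=mA and G=S] flMc[where M=mA and G=D'] flMc[where M=mA and G=P'])
  apply (simp only: A.lanti)
  apply (simp add: A.lcounit sw sinks psinks)
  done


lemma PhiK: "lin (\<lambda>(z1,z2). lin (\<lambda>s. lin (\<lambda>(y1,y2). lin (\<lambda>w. K w y2) (tmul mA mH s y1)) (TB.Dt z2)) (TT.St z1)) (TT.Dt z)
  = lin (\<lambda>(h1,h2). lin (\<lambda>(\<gamma>,\<delta>). lin (\<lambda>sg. lin (\<lambda>(h21,h22). lin (\<lambda>(q,s'). lin (\<lambda>w. K w (s',h22)) (tens uA (mH sg q))) (P' (\<delta>,h21))) (D' h2)) (S \<gamma>)) (P (fst z,h1))) (D (snd z))"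
proof (cases z)
  case (Pair c h)
  have "lin (\<lambda>(w,y2). K w y2) (lin (\<lambda>(z1,z2). lin (\<lambda>s. lin (\<lambda>(y1,y2). tens (mulv (tmul mA mH) (bv s) (bv y1)) (bv y2)) (TB.Dt z2)) (TT.St z1)) (TT.Dt (c,h)))
     = lin (\<lambda>(w,y2). K w y2) (lin (\<lambda>(h1,h2). lin (\<lambda>(\<gamma>,\<delta>). lin (\<lambda>sg. lin (\<lambda>(h21,h22). lin (\<lambda>(q,s'). tens (tens uA (mH sg q)) (bv (s',h22))) (P' (\<delta>,h21))) (D' h2)) (S \<gamma>)) (P (c,h1))) (D h))"
    by (simp only: Phi)
  then show ?thesis using Pair
    by (simp add: lin_assoc lin_lam_case tens_def mulv_bv split_def)
qed

lemma P'_rlin: "lin (\<lambda>w. lin K (P' (a,w))) (mH x y) = lin (\<lambda>(k,c). lin (\<lambda>k'. K (k',c)) (mH k y)) (P' (a,x))"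
  by (simp add: P'_pair sw sinks H.assoc)

lemma brace_R: "lin (\<lambda>(x, y). lin (\<lambda>(x1, x2). lin (\<lambda>(x11, x12). lin (\<lambda>(y1, y2).
          tens (mulv (tmul mA mH) (mulv (tmul mA mH) (bv x11) (TT.St x2)) (bv y1)) (bv (x12, y2)))
        (TB.Dt y)) (TB.Dt x1)) (TT.Dt x)) (TT.Dt (a,h)) = Wr a (\<lambda>b. MC2R b h)"
proof -
  have lf: "tens (mulv (tmul mA mH) (mulv (tmul mA mH) (bv x11) (TT.St z1)) (bv y1)) (bv (x12, y2))
     = lin (\<lambda>s. lin (\<lambda>w. tens (mulv (tmul mA mH) (bv x11) (bv w)) (bv (x12, y2))) (tmul mA mH s y1)) (TT.St z1)" for x11 z1 y1 x12 y2
  proof -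
    have "mulv (tmul mA mH) (mulv (tmul mA mH) (bv x11) (TT.St z1)) (bv y1) = mulv (tmul mA mH) (bv x11) (mulv (tmul mA mH) (TT.St z1) (bv y1))"
      by (rule alg_assoc_vec[OF TT.talg])
    also have "\<dots> = lin (\<lambda>s. mulv (tmul mA mH) (bv x11) (tmul mA mH s y1)) (TT.St z1)"
      by (simp add: mulv_lin_right[symmetric] mulv_bv_right)
    finally show ?thesis
      by (simp only: tens_lin_left[symmetric] mulv_lin_right[symmetric] lin_bv_id)
  qed
  show ?thesis
    apply (simp only: TT.coassocK)
    apply (simp only: lf)
    apply (simp only: flcp[where G=TT.St and P=TB.Dt])
    apply (subst flpc[where G=TB.Dt and P=TT.St])
    apply (subst flcc[where G=TB.Dt and P=TT.Dt])
    apply (simp only: PhiK)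
    apply (simp add: TT.Dt_pair TB.Dt_pair Wr_def MC2R_def sw sinks psinks P'_rlin)
    apply (simp only: flcc[where G=DA and P=D] flcc[where G=DA and P=P])
    apply (simp only: A.coassoc A.runit)
    apply (simp only: flcc[where G=D and P=P'] flcc[where G=D and P=D'] flcc[where G=D and P=P])
    apply (simp only: H.coassoc[symmetric])
    apply (simp only: flcc[where G=P and P=P'] flcc[where G=P and P=D'])
    apply (simp only: TT.P1[symmetric])
    apply (simp only: H.assoc)
    apply (simp only: flcc[where G=D' and P=P'] flpc[where G=D' and P=S])
    apply (simp only: flcp[where G=S and P=P'])
    apply (subst flcc[where G=P' and P=P'])
    apply (rule refl)
    done
qed

end

context hopf begin

definition "conv F G x y = lin (\<lambda>(x1,x2). lin (\<lambda>(y1,y2). mulv m (F x1 y1) (G x2 y2)) (D y)) (D x)"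

lemma alg: "is_algebra m u" using H by (simp add: is_hopf_algebra_def is_bialgebra_def)
lemma vassoc: "mulv m (mulv m X Y) Z = mulv m X (mulv m Y Z)" by (rule alg_assoc_vec[OF alg])
lemma vlunit: "mulv m u X = X" by (rule alg_lunit_vec[OF alg])
lemma vrunit: "mulv m X u = X" by (rule alg_runit_vec[OF alg])

lemma mulv_smult_left: "mulv m (smult c X) Y = smult c (mulv m X Y)"
  by (simp add: mulv_def lin_smult)
lemma mulv_smult_right: "mulv m X (smult c Y) = smult c (mulv m X Y)"
  by (simp add: mulv_def lin_smult lin_fun_smult)

lemma conv_assoc: "conv (conv F G) K x y = conv F (conv G K) x y"
proof -
  have "conv (conv F G) K x y = lin (\<lambda>(x1,x2). lin (\<lambda>(y1,y2). lin (\<lambda>(x11,x12). lin (\<lambda>(y11,y12).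
      mulv m (mulv m (F x11 y11) (G x12 y12)) (K x2 y2)) (D y1)) (D x1)) (D y)) (D x)"
    by (simp add: conv_def mulv_lin_left split_def)
  also have "\<dots> = lin (\<lambda>(x1,x2). lin (\<lambda>(y1,y2). lin (\<lambda>(x21,x22). lin (\<lambda>(y21,y22).
      mulv m (F x1 y1) (mulv m (G x21 y21) (K x22 y22))) (D y2)) (D x2)) (D y)) (D x)"
    apply (simp only: vassoc)
    apply (simp only: flcc[where G=D and P=D and v=y])
    apply (simp only: coassoc)
    done
  also have "\<dots> = conv F (conv G K) x y"
    by (simp add: conv_def mulv_lin_right split_def)
  finally show ?thesis .
qed


lemma conv_runit: "conv F (\<lambda>x y. smult (e x * e y) u) x y = F x y"
  by (simp add: conv_def mulv_smult_right vrunit smult_mult rcounit lin_fun_smult lin_fun_smult_case)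

lemma conv_lunit: "conv (\<lambda>x y. smult (e x * e y) u) F x y = F x y"
  by (simp add: conv_def mulv_smult_left vlunit smult_mult lcounit lin_fun_smult lin_fun_smult_case)

lemma conv_A: "conv (\<lambda>x y. lin S (m x y)) m x y = smult (e x * e y) u"
proof -
  have "conv (\<lambda>x y. lin S (m x y)) m x y = lin (\<lambda>(a,b). mulv m (S a) (bv b)) (lin D (m x y))"
    by (simp add: conv_def mult sw sink[where G=S and P=m])
  also have "\<dots> = lin (\<lambda>z. smult (e z) u) (m x y)"
    by (simp add: lin_assoc lanti0)
  also have "\<dots> = smult (e x * e y) u"
    by (simp add: lin_fun_smult_const epsm0)
  finally show ?thesis .
qed


lemma fold_r: "lin (\<lambda>(a,b). mulv m U (G a b)) V = mulv m U (lin (\<lambda>(a,b). G a b) V)"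
  by (simp add: mulv_lin_right split_def)
lemma fold_l: "lin (\<lambda>(a,b). mulv m (G a b) U) V = mulv m (lin (\<lambda>(a,b). G a b) V) U"
  by (simp add: mulv_lin_left split_def)

lemma conv_B: "conv m (\<lambda>x y. mulv m (S y) (S x)) x y = smult (e x * e y) u"
proof -
  have "conv m (\<lambda>x y. mulv m (S y) (S x)) x y = lin (\<lambda>(x1,x2). lin (\<lambda>(y1,y2).
      mulv m (bv x1) (mulv m (mulv m (bv y1) (S y2)) (S x2))) (D y)) (D x)"
    by (simp add: conv_def mulv_bv[of m, symmetric] vassoc)
  also have "\<dots> = lin (\<lambda>(x1,x2). mulv m (bv x1) (mulv m (lin (\<lambda>(y1,y2). mulv m (bv y1) (S y2)) (D y)) (S x2))) (D x)"
    by (simp only: fold_r fold_l)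
  also have "\<dots> = smult (e y) (lin (\<lambda>(x1,x2). mulv m (bv x1) (S x2)) (D x))"
    by (simp add: ranti0 mulv_smult_left mulv_smult_right vlunit lin_fun_smult_case)
  also have "\<dots> = smult (e x * e y) u"
    by (simp add: ranti0 smult_smult mult.commute)
  finally show ?thesis .
qed

lemma S_antimult: "lin S (m x y) = mulv m (S y) (S x)"
proof -
  let ?E = "\<lambda>x y. smult (e x * e y) u"
  have B: "?E = conv m (\<lambda>x y. mulv m (S y) (S x))"
    by (simp add: fun_eq_iff conv_B)
  have "lin S (m x y) = conv (\<lambda>x y. lin S (m x y)) ?E x y"
    by (rule conv_runit[symmetric])
  also have "\<dots> = conv (\<lambda>x y. lin S (m x y)) (conv m (\<lambda>x y. mulv m (S y) (S x))) x y"
    by (simp only: B)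
  also have "\<dots> = conv (conv (\<lambda>x y. lin S (m x y)) m) (\<lambda>x y. mulv m (S y) (S x)) x y"
    by (rule conv_assoc[symmetric])
  also have "\<dots> = conv ?E (\<lambda>x y. mulv m (S y) (S x)) x y"
  proof -
    have "conv (\<lambda>x y. lin S (m x y)) m = ?E" by (simp add: fun_eq_iff conv_A)
    then show ?thesis by simp
  qed
  also have "\<dots> = mulv m (S y) (S x)"
    by (rule conv_lunit)
  finally show ?thesis .
qed

lemma S_antimultK: "lin (\<lambda>z. lin K (S z)) (m x y) = lin (\<lambda>q. lin (\<lambda>p. lin K (m q p)) (S x)) (S y)"
  using lin_arg[OF S_antimult, of K x y] by (simp add: lin_assoc mulv_def)

end

locale cond = setting +
  assumes C1: "\<forall>a. lin (\<lambda>(g, b). lin (\<lambda>(g2, c). bv (g, g2, c)) (r b)) (r' a)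
       = lin (\<lambda>(h, b). lin (\<lambda>(h1, h2). lin (\<lambda>(h11, h12). lin (\<lambda>(g, c).
            tens (mulv mH (mulv mH (bv h11) (S h2)) (bv g)) (tens (bv h12) (bv c)))
          (r' b)) (D' h1)) (D h)) (r a)"
  and C2: "\<forall>h. lin (\<lambda>(h1, h2). lin (\<lambda>(g, x). bv (h1, g, x)) (f h2)) (D' h)
       = lin (\<lambda>(h1, h2). lin (\<lambda>(g, x). lin (\<lambda>(g1, g2). lin (\<lambda>(g11, g12). lin (\<lambda>(f', y).
            tens (mulv mH (mulv mH (mulv mH (bv g11) (S g2)) (bv f')) (bv h2))
                 (tens (bv g12) (bv y)))
          (r' x)) (D' g1)) (D g)) (f h1)) (D h)"
begin

lemma lin_cong_case: "(\<And>a b. F a b = G a b) \<Longrightarrow> lin (case_prod F) V = lin (case_prod G) V"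
proof -
  assume *: "\<And>a b. F a b = G a b"
  have "F = G" by (intro ext) (rule *)
  then show ?thesis by simp
qed

lemma bv_pair: "bv (x,y) = tens (bv x) (bv y)"
  by (simp add: tens_def)
lemma mHv: "mH x y = mulv mH (bv x) (bv y)" by (simp add: mulv_bv)
lemma mAv: "mA x y = mulv mA (bv x) (bv y)" by (simp add: mulv_bv)
lemma H_assoc_vec: "mulv mH (mulv mH x y) z = mulv mH x (mulv mH y z)" by (rule alg_assoc_vec[OF H_alg])
lemma H_lcomm_vec: "mulv mH x (mulv mH y z) = mulv mH y (mulv mH x z)"
  by (metis H_assoc_vec H_comm_vec)

lemma C1K: "lin (\<lambda>(g,b). lin (\<lambda>(g2,c). K g g2 c) (r b)) (r' a) = lin (\<lambda>(h,b). lin (\<lambda>(h1,h2). lin (\<lambda>(h11,h12). lin (\<lambda>(g,c).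
   lin (\<lambda>s. lin (\<lambda>t. lin (\<lambda>w. K w h12 c) (mH t g)) (mH h11 s)) (S h2)) (r' b)) (D' h1)) (D h)) (r a)"
  using lin_arg[OF C1[rule_format, of a], of "\<lambda>(a,b,c). K a b c"] by (simp add: sw split_def)

lemma C2K: "lin (\<lambda>(h1,h2). lin (\<lambda>(g,x). K h1 g x) (f h2)) (D' h) = lin (\<lambda>(h1,h2). lin (\<lambda>(g,x). lin (\<lambda>(g1,g2). lin (\<lambda>(g11,g12). lin (\<lambda>(f',y).
   lin (\<lambda>s. lin (\<lambda>t. lin (\<lambda>u. lin (\<lambda>w. K w g12 y) (mH u h2)) (mH t f')) (mH g11 s)) (S g2)) (r' x)) (D' g1)) (D g)) (f h1)) (D h)"
  using lin_arg[OF C2[rule_format, of h], of "\<lambda>(a,b,c). K a b c"] by (simp add: sw split_def)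

lemma C2b: "lin (\<lambda>(x1,x2). lin (\<lambda>(x11,x12). lin (\<lambda>(w0,w1). lin (\<lambda>s. lin (\<lambda>t. bv (t,w0,w1)) (mH x11 s)) (S x2)) (f x12)) (D' x1)) (D x)
  = lin (\<lambda>(g,x'). lin (\<lambda>(g1,g2). lin (\<lambda>(g11,g12). lin (\<lambda>(f',yy). lin (\<lambda>s2. lin (\<lambda>t2. lin (\<lambda>u2. bv (u2,g12,yy)) (mH t2 f')) (mH g11 s2)) (S g2)) (r' x')) (D' g1)) (D g)) (f x)"
  apply (simp only: C2K)
  apply (simp only: H.coassoc)
  apply (simp only: flcc[where G=f and P=D])
  apply (subst flcc[where G=D and P=D])
  apply (simp only: flcc[where G=D' and P=D] flcc[where G=r' and P=D] flcp[where G=S and P=D] flMc[where M=mH and G=D])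
  apply (simp only: sink[where G=S and P=mH])
  apply (simp only: H.assoc)
  apply (simp only: H.ranti)
  apply (simp add: H.runit lin_fun_smult lin_fun_smult_case H.rcounit)
  done


lemma C2bK: "lin (\<lambda>(x1,x2). lin (\<lambda>(x11,x12). lin (\<lambda>(w0,w1). lin (\<lambda>s. lin (\<lambda>t. K t w0 w1) (mH x11 s)) (S x2)) (f x12)) (D' x1)) (D x)
  = lin (\<lambda>(g,x'). lin (\<lambda>(g1,g2). lin (\<lambda>(g11,g12). lin (\<lambda>(f',yy). lin (\<lambda>s2. lin (\<lambda>t2. lin (\<lambda>u2. K u2 g12 yy) (mH t2 f')) (mH g11 s2)) (S g2)) (r' x')) (D' g1)) (D g)) (f x)"
  using lin_arg[OF C2b, of "\<lambda>(a,b,c). K a b c" x] by (simp add: sw split_def)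

lemma MC2: "MC2L b h = MC2R b h"
  apply (simp add: MC2L_def MC2R_def P_pair P'_pair sw sinks)
  apply (simp only: flcc[where G=D and P=r'])
  apply (simp only: brace)
  apply (simp only: sinks)
  apply (simp only: flcc[where G=f and P=r'] flcc[where G=f and P=r] flcc[where G=f and P=D'] flpc[where G=f and P=S])
  apply (simp only: flcp[where G=S and P=D'])
  apply (simp only: flMc[where M=mH and G=D'] flMc[where M=mH and G=r'] flMc[where M=mH and G=r])
  apply (simp only: C2bK)
  apply (simp only: sinks)
  apply (simp only: flcc[where G=r and P=f] flcc[where G=r and P=D] flcc[where G=r and P=D'] flcc[where G=r and P=r'] flpc[where G=r and P=S])
  apply (simp only: C1K)
  apply (simp add: H.mult H'.mult R'.mult H.S_antimultK sinks)
  apply (simp only: flcc[where G=r and w=b and P=D] flcc[where G=r and w=b and P=D'] flcc[where G=r and w=b and P=r] flcc[where G=r and w=b and P=r'] flcc[where G=r and w=b and P=f] flpc[where G=r and w=b and P=S])?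
  apply (rule lin_cong_case)
  subgoal for \<rho>1 \<rho>0
  apply (simp only: flcc[where G=D and w=h and P=D] flcc[where G=D and w=h and P=D'] flcc[where G=D and w=h and P=r] flcc[where G=D and w=h and P=r'] flcc[where G=D and w=h and P=f] flpc[where G=D and w=h and P=S])?
  apply (rule lin_cong_case)
  subgoal for x y
  apply (simp only: flcc[where G=f and w=x and P=D] flcc[where G=f and w=x and P=D'] flcc[where G=f and w=x and P=r] flcc[where G=f and w=x and P=r'] flcc[where G=f and w=x and P=f] flpc[where G=f and w=x and P=S])?
  apply (rule lin_cong_case)
  subgoal for \<phi>0 \<phi>1
  apply (simp only: flcc[where G=D and w=\<rho>1 and P=D] flcc[where G=D and w=\<rho>1 and P=D'] flcc[where G=D and w=\<rho>1 and P=r] flcc[where G=D and w=\<rho>1 and P=r'] flcc[where G=D and w=\<rho>1 and P=f] flpc[where G=D and w=\<rho>1 and P=S])?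
  apply (rule lin_cong_case)
  subgoal for \<rho>11 \<rho>12
  apply (simp only: flcc[where G=D and w=\<phi>0 and P=D] flcc[where G=D and w=\<phi>0 and P=D'] flcc[where G=D and w=\<phi>0 and P=r] flcc[where G=D and w=\<phi>0 and P=r'] flcc[where G=D and w=\<phi>0 and P=f] flpc[where G=D and w=\<phi>0 and P=S])?
  apply (rule lin_cong_case)
  subgoal for \<phi>01 \<phi>02
  apply (simp only: flcc[where G=D' and w=\<rho>11 and P=D] flcc[where G=D' and w=\<rho>11 and P=D'] flcc[where G=D' and w=\<rho>11 and P=r] flcc[where G=D' and w=\<rho>11 and P=r'] flcc[where G=D' and w=\<rho>11 and P=f] flpc[where G=D' and w=\<rho>11 and P=S])?
  apply (rule lin_cong_case)
  subgoal for \<rho>111 \<rho>112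
  apply (simp only: flcc[where G=D' and w=\<phi>01 and P=D] flcc[where G=D' and w=\<phi>01 and P=D'] flcc[where G=D' and w=\<phi>01 and P=r] flcc[where G=D' and w=\<phi>01 and P=r'] flcc[where G=D' and w=\<phi>01 and P=f] flpc[where G=D' and w=\<phi>01 and P=S])?
  apply (rule lin_cong_case)
  subgoal for \<phi>011 \<phi>012
  apply (simp only: flcc[where G=D' and w=y and P=D] flcc[where G=D' and w=y and P=D'] flcc[where G=D' and w=y and P=r] flcc[where G=D' and w=y and P=r'] flcc[where G=D' and w=y and P=f] flpc[where G=D' and w=y and P=S])?
  apply (rule lin_cong_case)
  subgoal for y1 y2
  apply (simp only: flcc[where G=r' and w=\<rho>0 and P=D] flcc[where G=r' and w=\<rho>0 and P=D'] flcc[where G=r' and w=\<rho>0 and P=r] flcc[where G=r' and w=\<rho>0 and P=r'] flcc[where G=r' and w=\<rho>0 and P=f] flpc[where G=r' and w=\<rho>0 and P=S])?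
  apply (rule lin_cong_case)
  subgoal for g0 c0
  apply (simp only: flcc[where G=r' and w=\<phi>1 and P=D] flcc[where G=r' and w=\<phi>1 and P=D'] flcc[where G=r' and w=\<phi>1 and P=r] flcc[where G=r' and w=\<phi>1 and P=r'] flcc[where G=r' and w=\<phi>1 and P=f] flpc[where G=r' and w=\<phi>1 and P=S])?
  apply (rule lin_cong_case)
  subgoal for f' yy
  apply (simp only: flcp[where G=S and w=\<rho>12 and P=D] flcp[where G=S and w=\<rho>12 and P=D'] flcp[where G=S and w=\<rho>12 and P=r] flcp[where G=S and w=\<rho>12 and P=r'] flcp[where G=S and w=\<rho>12 and P=f] flpp[where G=S and w=\<rho>12 and P=S])?
  apply (rule lin_cong)
  subgoal for s1
  apply (simp only: flcp[where G=S and w=\<phi>02 and P=D] flcp[where G=S and w=\<phi>02 and P=D'] flcp[where G=S and w=\<phi>02 and P=r] flcp[where G=S and w=\<phi>02 and P=r'] flcp[where G=S and w=\<phi>02 and P=f] flpp[where G=S and w=\<phi>02 and P=S])?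
  apply (rule lin_cong)
  subgoal for s2
  apply (simp only: bv_pair mHv mAv tens_lin_left[symmetric] tens_lin_right[symmetric]
     mulv_lin_left[symmetric] mulv_lin_right[symmetric] lin_bv_id)
  apply (simp only: H_assoc_vec H_comm_vec H_lcomm_vec)
  done
  done done done done done done done done done done done
  done

end

lemma counit_unique:
  assumes "is_coalgebra D e" "is_coalgebra D e'"
  shows "e x = e' x"
proof -
  have l: "lin (\<lambda>(y,z). smult (e y) (bv z)) (D x) = bv x" using assms(1) by (simp add: is_coalgebra_def)
  have r: "lin (\<lambda>(y,z). smult (e' z) (bv y)) (D x) = bv x" using assms(2) by (simp add: is_coalgebra_def)
  have "e x = linf e (lin (\<lambda>(y,z). smult (e' z) (bv y)) (D x))" by (simp add: r)
  also have "\<dots> = linf (\<lambda>(y,z). e' z * e y) (D x)" by (simp add: linf_lin split_def linf_smult)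
  also have "\<dots> = linf (\<lambda>(y,z). e y * e' z) (D x)" by (simp add: mult.commute)
  also have "\<dots> = linf e' (lin (\<lambda>(y,z). smult (e y) (bv z)) (D x))" by (simp add: linf_lin split_def linf_smult)
  also have "\<dots> = e' x" by (simp add: l)
  finally show ?thesis .
qed

context hopf begin

definition "cv F G x = lin (\<lambda>(x1,x2). mulv m (F x1) (G x2)) (D x)"

lemma cv_assoc: "cv (cv F G) K x = cv F (cv G K) x"
proof -
  have "cv (cv F G) K x = lin (\<lambda>(x1,x2). lin (\<lambda>(y1,y2). mulv m (mulv m (F y1) (G y2)) (K x2)) (D x1)) (D x)"
    by (simp add: cv_def mulv_lin_left split_def)
  also have "\<dots> = lin (\<lambda>(x1,x2). lin (\<lambda>(y1,y2). mulv m (F x1) (mulv m (G y1) (K y2))) (D x2)) (D x)"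
    by (simp only: coassoc vassoc)
  also have "\<dots> = cv F (cv G K) x"
    by (simp add: cv_def mulv_lin_right split_def)
  finally show ?thesis .
qed

lemma antipode_unique:
  assumes S': "\<And>x. lin (\<lambda>(y, z). mulv m (S' y) (bv z)) (D x) = smult (e x) u"
  shows "S' x = S x"
proof -
  have eu: "(\<lambda>x. smult (e x) u) = cv (\<lambda>x. bv x) S" by (simp add: fun_eq_iff cv_def ranti0)
  have eu2: "cv S' (\<lambda>x. bv x) = (\<lambda>x. smult (e x) u)" by (simp add: fun_eq_iff cv_def S')
  have "S' x = cv S' (\<lambda>x. smult (e x) u) x"
    by (simp add: cv_def mulv_smult_right vrunit rcounit)
  also have "\<dots> = cv S' (cv (\<lambda>x. bv x) S) x" by (simp only: eu)
  also have "\<dots> = cv (cv S' (\<lambda>x. bv x)) S x" by (simp only: cv_assoc)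
  also have "\<dots> = cv (\<lambda>x. smult (e x) u) S x" by (simp only: eu2)
  also have "\<dots> = S x" by (simp add: cv_def mulv_smult_left vlunit lcounit)
  finally show ?thesis .
qed

end


context setting begin

lemma lin_bv_pair: "lin (\<lambda>(x,y). bv (x,y)) v = v"
  by (simp add: case_prod_beta' split_def)

lemma Wr_proj: "lin (\<lambda>((x1,x2),(y1,y2),(z1,z2)). smult (eA x1 * eA y1) (bv (x2,y2,z1,z2))) (Wr a X)
   = X a"
  apply (simp add: Wr_def sw lin_case_prod)
  apply (simp add: TB.Pe1 A.lcounit lin_fun_smult_case lin_bv_pair)
  done


lemma C1_L: "lin (\<lambda>(\<kappa>,k,c,g2). smult (e' g2) (bv (\<kappa>,k,c))) (lin (\<lambda>h. MC2L a h) uH)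
   = lin (\<lambda>(g, b). lin (\<lambda>(g2, c). bv (g, g2, c)) (r b)) (r' a)"
  apply (simp add: MC2L_def P_pair P'_pair sw sinks H'.unitD H.unitD F.unit H.runit A.runit H'.epsu)
  done

lemma C1_R: "lin (\<lambda>(\<kappa>,k,c,g2). smult (e' g2) (bv (\<kappa>,k,c))) (lin (\<lambda>h. MC2R a h) uH)
   = lin (\<lambda>(h, b). lin (\<lambda>(h1, h2). lin (\<lambda>(h11, h12). lin (\<lambda>(g, c).
            tens (mulv mH (mulv mH (bv h11) (S h2)) (bv g)) (tens (bv h12) (bv c)))
          (r' b)) (D' h1)) (D h)) (r a)"
  apply (simp add: MC2R_def P_pair P'_pair sw sinks H'.unitD H.unitD F.unit H.runit A.runit H'.epsu)
  done


lemma C2_R: "lin (\<lambda>(\<kappa>,k,c,g2). smult (e' g2) (bv (\<kappa>,k,c))) (lin (\<lambda>b. MC2R b h) uA)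
   = lin (\<lambda>(h1, h2). lin (\<lambda>(g, x). lin (\<lambda>(g1, g2). lin (\<lambda>(g11, g12). lin (\<lambda>(f', y).
            tens (mulv mH (mulv mH (mulv mH (bv g11) (S g2)) (bv f')) (bv h2))
                 (tens (bv g12) (bv y)))
          (r' x)) (D' g1)) (D g)) (f h1)) (D h)"
  apply (simp add: MC2R_def P_pair P'_pair sw sinks R.unit H.lunit A.lunit H'.rcounit H.assoc)
  done

lemma C2_L: "lin (\<lambda>(\<kappa>,k,c,g2). smult (e' g2) (bv (\<kappa>,k,c))) (lin (\<lambda>b. MC2L b h) uA)
   = lin (\<lambda>(h1, h2). lin (\<lambda>(g, x). bv (h1, g, x)) (f h2)) (D' h)"
  apply (simp add: MC2L_def P_pair P'_pair sw sinks R'.unit R.unit H.lunit A.lunit)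
  apply (simp only: brace)
  apply (simp add: lin_fun_smult lin_fun_smult_case H'.rcounit)
  apply (simp only: H.coassoc)
  apply (simp only: flcc[where G=D' and P=D])
  apply (simp only: H.assoc)
  apply (simp only: H.lanti)
  apply (simp add: H.runit lin_fun_smult lin_fun_smult_case H.rcounit)
  done


lemma DT_eq: "bicrossed_coproduct mA DA mH D r f = TT.Dt"
proof (rule ext)
  fix p :: "'a \<times> 'h"
  obtain a h where p: "p = (a,h)" by (cases p)
  show "bicrossed_coproduct mA DA mH D r f p = TT.Dt p"
    unfolding p
    apply (simp add: bicrossed_coproduct_def TT.Dt_pair P_pair sw sinks)
    apply (simp only: flcc[where G=D and P=r])
    done
qed

lemma DB_eq: "smash_coproduct DA mH D' r' = TB.Dt"
proof (rule ext)
  fix p :: "'a \<times> 'h"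
  obtain a h where p: "p = (a,h)" by (cases p)
  show "smash_coproduct DA mH D' r' p = TB.Dt p"
    unfolding p
    apply (simp add: smash_coproduct_def TB.Dt_pair P'_pair sw sinks)
    apply (simp only: flcc[where G=D' and P=r'])
    done
qed

abbreviation "braceL p \<equiv> lin (\<lambda>(x, y). lin (\<lambda>(y1, y2). bv (x, y1, y2)) (TT.Dt y)) (TB.Dt p)"
abbreviation "braceR Sx p \<equiv> lin (\<lambda>(x, y). lin (\<lambda>(x1, x2). lin (\<lambda>(x11, x12). lin (\<lambda>(y1, y2).
          tens (mulv (tmul mA mH) (mulv (tmul mA mH) (bv x11) (Sx x2)) (bv y1)) (bv (x12, y2)))
        (TB.Dt y)) (TB.Dt x1)) (TT.Dt x)) (TT.Dt p)"

lemma brace_MC2: "braceL (a,h) = braceR TT.St (a,h) \<longleftrightarrow> Wr a (\<lambda>b. MC2L b h) = Wr a (\<lambda>b. MC2R b h)"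
  by (simp only: brace_L brace_R)

lemma MC2_of_brace:
  assumes "\<forall>p. braceL p = braceR TT.St p"
  shows "MC2L a h = MC2R a h"
proof -
  have "Wr a (\<lambda>b. MC2L b h) = Wr a (\<lambda>b. MC2R b h)"
    using assms brace_MC2 by blast
  then have "lin (\<lambda>((x1,x2),(y1,y2),(z1,z2)). smult (eA x1 * eA y1) (bv (x2,y2,z1,z2))) (Wr a (\<lambda>b. MC2L b h))
    = lin (\<lambda>((x1,x2),(y1,y2),(z1,z2)). smult (eA x1 * eA y1) (bv (x2,y2,z1,z2))) (Wr a (\<lambda>b. MC2R b h))"
    by simp
  then show ?thesis by (simp only: Wr_proj)
qed

lemma conds_of_MC2:
  assumes "\<And>a h. MC2L a h = MC2R a h"
  shows "(\<forall>a. lin (\<lambda>(g, b). lin (\<lambda>(g2, c). bv (g, g2, c)) (r b)) (r' a)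
       = lin (\<lambda>(h, b). lin (\<lambda>(h1, h2). lin (\<lambda>(h11, h12). lin (\<lambda>(g, c).
            tens (mulv mH (mulv mH (bv h11) (S h2)) (bv g)) (tens (bv h12) (bv c)))
          (r' b)) (D' h1)) (D h)) (r a)) \<and>
    (\<forall>h. lin (\<lambda>(h1, h2). lin (\<lambda>(g, x). bv (h1, g, x)) (f h2)) (D' h)
       = lin (\<lambda>(h1, h2). lin (\<lambda>(g, x). lin (\<lambda>(g1, g2). lin (\<lambda>(g11, g12). lin (\<lambda>(f', y).
            tens (mulv mH (mulv mH (mulv mH (bv g11) (S g2)) (bv f')) (bv h2))
                 (tens (bv g12) (bv y)))
          (r' x)) (D' g1)) (D g)) (f h1)) (D h))"
proof (intro conjI allI)
  fix a
  have "(\<lambda>h. MC2L a h) = (\<lambda>h. MC2R a h)" using assms by blast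
  then show "lin (\<lambda>(g, b). lin (\<lambda>(g2, c). bv (g, g2, c)) (r b)) (r' a)
       = lin (\<lambda>(h, b). lin (\<lambda>(h1, h2). lin (\<lambda>(h11, h12). lin (\<lambda>(g, c).
            tens (mulv mH (mulv mH (bv h11) (S h2)) (bv g)) (tens (bv h12) (bv c)))
          (r' b)) (D' h1)) (D h)) (r a)"
    using C1_L[of a] C1_R[of a] by simp
next
  fix h
  have "(\<lambda>b. MC2L b h) = (\<lambda>b. MC2R b h)" using assms by blast
  then show "lin (\<lambda>(h1, h2). lin (\<lambda>(g, x). bv (h1, g, x)) (f h2)) (D' h)
       = lin (\<lambda>(h1, h2). lin (\<lambda>(g, x). lin (\<lambda>(g1, g2). lin (\<lambda>(g11, g12). lin (\<lambda>(f', y).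
            tens (mulv mH (mulv mH (mulv mH (bv g11) (S g2)) (bv f')) (bv h2))
                 (tens (bv g12) (bv y)))
          (r' x)) (D' g1)) (D g)) (f h1)) (D h)"
    using C2_L[of h] C2_R[of h] by simp
qed

end

context cond begin
lemma brace_B: "braceL (a,h) = braceR TT.St (a,h)"
  unfolding brace_MC2 by (simp add: MC2)
end




theorem proposition4p3:
  fixes mA :: "'a \<Rightarrow> 'a \<Rightarrow> ('a \<Rightarrow>\<^sub>0 'k::field)" and uA :: "'a \<Rightarrow>\<^sub>0 'k"
    and \<Delta>A :: "'a \<Rightarrow> ('a \<times> 'a \<Rightarrow>\<^sub>0 'k)" and \<epsilon>A :: "'a \<Rightarrow> 'k" and SA :: "'a \<Rightarrow> ('a \<Rightarrow>\<^sub>0 'k)"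
    and mH :: "'h \<Rightarrow> 'h \<Rightarrow> ('h \<Rightarrow>\<^sub>0 'k)" and uH :: "'h \<Rightarrow>\<^sub>0 'k"
    and \<Delta> :: "'h \<Rightarrow> ('h \<times> 'h \<Rightarrow>\<^sub>0 'k)" and \<epsilon> :: "'h \<Rightarrow> 'k" and S :: "'h \<Rightarrow> ('h \<Rightarrow>\<^sub>0 'k)"
    and \<Delta>' :: "'h \<Rightarrow> ('h \<times> 'h \<Rightarrow>\<^sub>0 'k)" and \<epsilon>' :: "'h \<Rightarrow> 'k" and T :: "'h \<Rightarrow> ('h \<Rightarrow>\<^sub>0 'k)"
    and \<rho> :: "'a \<Rightarrow> ('h \<times> 'a \<Rightarrow>\<^sub>0 'k)" and \<phi> :: "'h \<Rightarrow> ('h \<times> 'a \<Rightarrow>\<^sub>0 'k)"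
    and \<rho>' :: "'a \<Rightarrow> ('h \<times> 'a \<Rightarrow>\<^sub>0 'k)"
  assumes hopfA: "is_hopf_algebra mA uA \<Delta>A \<epsilon>A SA"
    and braceH: "is_hopf_brace mH uH \<Delta> \<epsilon> S \<Delta>' \<epsilon>' T"
    and commH: "is_commutative mH"
    and mp: "hopf_matched_pair mA uA \<Delta>A \<epsilon>A SA mH uH \<Delta> \<epsilon> S \<rho> \<phi>"
    and cb: "left_comodule_bialgebra mH uH \<Delta>' \<epsilon>' mA uA \<Delta>A \<epsilon>A \<rho>'"
  shows "hopf_brace_coproducts (tmul mA mH) (tens uA uH)
            (bicrossed_coproduct mA \<Delta>A mH \<Delta> \<rho> \<phi>) (smash_coproduct \<Delta>A mH \<Delta>' \<rho>')
    \<longleftrightarrow>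
    (\<forall>a. lin (\<lambda>(g, b). lin (\<lambda>(g2, c). bv (g, g2, c)) (\<rho> b)) (\<rho>' a)
       = lin (\<lambda>(h, b). lin (\<lambda>(h1, h2). lin (\<lambda>(h11, h12). lin (\<lambda>(g, c).
            tens (mulv mH (mulv mH (bv h11) (S h2)) (bv g)) (tens (bv h12) (bv c)))
          (\<rho>' b)) (\<Delta>' h1)) (\<Delta> h)) (\<rho> a)) \<and>
    (\<forall>h. lin (\<lambda>(h1, h2). lin (\<lambda>(g, x). bv (h1, g, x)) (\<phi> h2)) (\<Delta>' h)
       = lin (\<lambda>(h1, h2). lin (\<lambda>(g, x). lin (\<lambda>(g1, g2). lin (\<lambda>(g11, g12). lin (\<lambda>(f, y).
            tens (mulv mH (mulv mH (mulv mH (bv g11) (S g2)) (bv f)) (bv h2))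
                 (tens (bv g12) (bv y)))
          (\<rho>' x)) (\<Delta>' g1)) (\<Delta> g)) (\<phi> h1)) (\<Delta> h))"
proof -
  interpret st: setting mA uA \<Delta>A \<epsilon>A SA mH uH \<Delta> \<epsilon> S \<Delta>' \<epsilon>' T \<rho> \<phi> \<rho>'
    using hopfA braceH commH mp cb by (simp add: setting_def)
  have DT: "bicrossed_coproduct mA \<Delta>A mH \<Delta> \<rho> \<phi> = st.TT.Dt" by (rule st.DT_eq)
  have DB: "smash_coproduct \<Delta>A mH \<Delta>' \<rho>' = st.TB.Dt" by (rule st.DB_eq)
  have h0: "is_hopf_algebra (tmul mA mH) (tens uA uH) st.TT.Dt st.TT.et st.TT.St"
    by (rule st.TT.twisted_hopf)
  have h0': "is_hopf_algebra (tmul mA mH) (tens uA uH) st.TB.Dt st.TB.et st.TB.St"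
    by (rule st.TB.twisted_hopf)
  show ?thesis
  proof
    assume "hopf_brace_coproducts (tmul mA mH) (tens uA uH)
            (bicrossed_coproduct mA \<Delta>A mH \<Delta> \<rho> \<phi>) (smash_coproduct \<Delta>A mH \<Delta>' \<rho>')"
    then obtain e1 S1 e2 T2 where br: "is_hopf_brace (tmul mA mH) (tens uA uH) st.TT.Dt e1 S1 st.TB.Dt e2 T2"
      unfolding hopf_brace_coproducts_def DT DB by blast
    have h1: "is_hopf_algebra (tmul mA mH) (tens uA uH) st.TT.Dt e1 S1"
      using br by (simp add: is_hopf_brace_def)
    have e1: "e1 x = st.TT.et x" for x
      using counit_unique[of st.TT.Dt e1 st.TT.et] h1 h0 by (simp add: is_hopf_algebra_def is_bialgebra_def)
    then have e1eq: "e1 = st.TT.et" by (rule ext)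
    interpret B: hopf "tmul mA mH" "tens uA uH" st.TT.Dt st.TT.et st.TT.St
      by (rule hopf.intro, rule h0)
    have S1: "S1 x = st.TT.St x" for x
    proof (rule B.antipode_unique)
      show "lin (\<lambda>(y, z). mulv (tmul mA mH) (S1 y) (bv z)) (st.TT.Dt x) = smult (st.TT.et x) (tens uA uH)" for x
        using h1 e1eq by (cases x) (simp add: is_hopf_algebra_def)
    qed
    then have S1eq: "S1 = st.TT.St" by (rule ext)
    have bb: "\<forall>p. st.braceL p = st.braceR st.TT.St p"
      using br S1eq by (simp add: is_hopf_brace_def)
    have MC: "st.MC2L a h = st.MC2R a h" for a h by (rule st.MC2_of_brace[OF bb])
    show "(\<forall>a. lin (\<lambda>(g, b). lin (\<lambda>(g2, c). bv (g, g2, c)) (\<rho> b)) (\<rho>' a)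
       = lin (\<lambda>(h, b). lin (\<lambda>(h1, h2). lin (\<lambda>(h11, h12). lin (\<lambda>(g, c).
            tens (mulv mH (mulv mH (bv h11) (S h2)) (bv g)) (tens (bv h12) (bv c)))
          (\<rho>' b)) (\<Delta>' h1)) (\<Delta> h)) (\<rho> a)) \<and>
    (\<forall>h. lin (\<lambda>(h1, h2). lin (\<lambda>(g, x). bv (h1, g, x)) (\<phi> h2)) (\<Delta>' h)
       = lin (\<lambda>(h1, h2). lin (\<lambda>(g, x). lin (\<lambda>(g1, g2). lin (\<lambda>(g11, g12). lin (\<lambda>(f, y).
            tens (mulv mH (mulv mH (mulv mH (bv g11) (S g2)) (bv f)) (bv h2))
                 (tens (bv g12) (bv y)))
          (\<rho>' x)) (\<Delta>' g1)) (\<Delta> g)) (\<phi> h1)) (\<Delta> h))"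
      by (rule st.conds_of_MC2[OF MC])
  next
    assume C: "(\<forall>a. lin (\<lambda>(g, b). lin (\<lambda>(g2, c). bv (g, g2, c)) (\<rho> b)) (\<rho>' a)
       = lin (\<lambda>(h, b). lin (\<lambda>(h1, h2). lin (\<lambda>(h11, h12). lin (\<lambda>(g, c).
            tens (mulv mH (mulv mH (bv h11) (S h2)) (bv g)) (tens (bv h12) (bv c)))
          (\<rho>' b)) (\<Delta>' h1)) (\<Delta> h)) (\<rho> a)) \<and>
    (\<forall>h. lin (\<lambda>(h1, h2). lin (\<lambda>(g, x). bv (h1, g, x)) (\<phi> h2)) (\<Delta>' h)
       = lin (\<lambda>(h1, h2). lin (\<lambda>(g, x). lin (\<lambda>(g1, g2). lin (\<lambda>(g11, g12). lin (\<lambda>(f, y).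
            tens (mulv mH (mulv mH (mulv mH (bv g11) (S g2)) (bv f)) (bv h2))
                 (tens (bv g12) (bv y)))
          (\<rho>' x)) (\<Delta>' g1)) (\<Delta> g)) (\<phi> h1)) (\<Delta> h))"
    interpret cd: cond mA uA \<Delta>A \<epsilon>A SA mH uH \<Delta> \<epsilon> S \<Delta>' \<epsilon>' T \<rho> \<phi> \<rho>'
      using hopfA braceH commH mp cb C by (simp add: cond_def cond_axioms_def setting_def)
    have bb: "\<forall>p. st.braceL p = st.braceR st.TT.St p"
    proof
      fix p :: "'a \<times> 'h"
      obtain a h where p: "p = (a,h)" by (cases p)
      show "st.braceL p = st.braceR st.TT.St p" unfolding p by (rule cd.brace_B)
    qed
    have "is_hopf_brace (tmul mA mH) (tens uA uH) st.TT.Dt st.TT.et st.TT.St st.TB.Dt st.TB.et st.TB.St"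
      unfolding is_hopf_brace_def using h0 h0' bb by blast
    then show "hopf_brace_coproducts (tmul mA mH) (tens uA uH)
            (bicrossed_coproduct mA \<Delta>A mH \<Delta> \<rho> \<phi>) (smash_coproduct \<Delta>A mH \<Delta>' \<rho>')"
      unfolding hopf_brace_coproducts_def DT DB by blast
  qed
qed


end
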